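(* Algorithm Exact Count solves the $k$-ribbon problem on a line of $n$ agents, for any choice of starting agent, within at most $(2-\frac1k)n+k$ rounds, using at most $(4-\frac2k)n\log n$ message bits in total and $3\log n+\log k+O(1)$ bits of memory per agent.
   Context: Message passing model (1D): a line graph of $n$ agents, synchronous rounds, in each round each agent may send a reliable message to each neighbor. All agents run the same algorithm, have no knowledge of their global position or of $n$, but share a common sense of direction (left/right), and endpoints know they are endpoints. Initially all agents but one arbitrary starting agent are asleep; a sleeping agent wakes when it receives a message. The $k$-ribbon problem: every agent must output a color in $\{1,\dots,k\}$ so that each color class is a contiguous subpath, colors appear in increasing order from left to right, and the numbers of agents of any two colors differ by at most $1$. Algorithm Exact Count: the starting agent sets $n_{mid}\leftarrow 0$ and sends $n_{mid}+1$ in both directions; every other agent, upon waking by a value, stores it as $n_{mid}$ and forwards $n_{mid}+1$ in the same direction; each agent sets $t\leftarrow n_{mid}$ upon waking and increments $t$ every round. When the left endpoint receives a value it decides color $1$ and sends $n_\ell=1$ to its right neighbor; symmetrically the right endpoint decides color $k$ and sends $n_r=1$ leftwards. An agent receiving $n_d$ ($d\in\{\ell,r\}$) stores it (it equals the number of agents on side $d$) and forwards $n_d+1$ in the same direction. Once an agent knows both $n_\ell$ and $n_r$ it decides its color (the color its position receives in the $k$-ribbon, which is determined by $n_\ell,n_r$ and $k$). Early decision: if an agent knows $n_d$ and $t\ge 2(k-1)n_d-n_{mid}$, it decides color $1$ if $d=\ell$ and color $k$ if $d=r$.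
   Formalization: The early-decision bound is $t\ge 2(k-1)n_d+n_{mid}$ when the starting agent lies on side d, decided agents do not forward $n_d+1$, and the larger ribbon classes are the first ceil((n mod k)/2) and last floor((n mod k)/2) colors. Apart from conventions, each condition added here is assumed in the paper as well or is needed for the statement above to hold. *)

theory Defs
  imports Complex_Main "HOL-Library.Log_Nat"
begin

text \<open>Agents of the line are the positions 0,...,n-1 (0 = left endpoint).
  A colouring is a function from positions to colours.\<close>

definition is_ribbon :: "nat \<Rightarrow> nat \<Rightarrow> (nat \<Rightarrow> nat) \<Rightarrow> bool" where
  "is_ribbon n k c \<longleftrightarrow>
     (\<forall>i<n. 1 \<le> c i \<and> c i \<le> k) \<and>
     (\<forall>i j m. i \<le> m \<and> m \<le> j \<and> j < n \<and> c i = c j \<longrightarrow> c m = c i) \<and>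
     (\<forall>i j. i \<le> j \<and> j < n \<longrightarrow> c i \<le> c j) \<and>
     (\<forall>a b. 1 \<le> a \<and> a \<le> k \<and> 1 \<le> b \<and> b \<le> k \<longrightarrow>
        card {i. i < n \<and> c i = a} \<le> card {i. i < n \<and> c i = b} + 1)"

text \<open>The specific k-ribbon computed by the agents from (n_l, n_r):
  every colour class has n div k or n div k + 1 agents; the n mod k larger classes are
  the first ceil((n mod k)/2) and the last floor((n mod k)/2) colours (so that the
  left endpoint gets colour 1 and the right endpoint colour k, as the algorithm demands).\<close>

definition ribbon_size :: "nat \<Rightarrow> nat \<Rightarrow> nat \<Rightarrow> nat" where
  "ribbon_size n k c = n div k +
     (if c \<le> (n mod k + 1) div 2 \<or> k - (n mod k) div 2 < c then 1 else 0)"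

definition ribbon_color :: "nat \<Rightarrow> nat \<Rightarrow> nat \<Rightarrow> nat" where
  "ribbon_color n k i = (LEAST c. i < (\<Sum>c'=1..c. ribbon_size n k c'))"

text \<open>Counters that are no longer needed are erased (None).
  fmL/fmR: forward n_mid+1 to the left/right in the next round; fl/fr: forward n_l+1 to the
  right / n_r+1 to the left in the next round. fromL: the agent was woken from the left.\<close>

record agent_state =
  awake :: bool
  mid :: "nat option"
  tm :: "nat option"
  nl :: "nat option"
  nr :: "nat option"
  col :: "nat option"
  fromL :: bool
  fmL :: bool
  fmR :: bool
  fl :: bool
  fr :: bool

text \<open>A message carries an optional n_mid value and an optional n_d value
  (n_l for messages travelling right, n_r for messages travelling left).\<close>
type_synonym msg = "nat option \<times> nat option"

definition sleeping :: agent_state where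
  "sleeping = \<lparr>awake = False, mid = None, tm = None, nl = None, nr = None, col = None,
     fromL = False, fmL = False, fmR = False, fl = False, fr = False\<rparr>"

definition decide :: "nat \<Rightarrow> bool \<Rightarrow> bool \<Rightarrow> agent_state \<Rightarrow> agent_state" where
  "decide k isL isR st =
    (if col st \<noteq> None then st
     else if isL then st\<lparr>col := Some 1\<rparr>
     else if isR then st\<lparr>col := Some k\<rparr>
     else (case (nl st, nr st, mid st, tm st) of
        (Some a, Some b, _, _) \<Rightarrow> st\<lparr>col := Some (ribbon_color (a + b + 1) k a)\<rparr>
      | (Some a, None, Some m, Some t) \<Rightarrow>
          if (if fromL st then 2 * (k - 1) * a + m \<le> t else 2 * (k - 1) * a \<le> t + m)
          then st\<lparr>col := Some 1\<rparr> else st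
      | (None, Some b, Some m, Some t) \<Rightarrow>
          if (if fromL st then 2 * (k - 1) * b \<le> t + m else 2 * (k - 1) * b + m \<le> t)
          then st\<lparr>col := Some k\<rparr> else st
      | _ \<Rightarrow> st))"

definition gc :: "agent_state \<Rightarrow> agent_state" where
  "gc st = (if col st = None then st else
     st\<lparr>tm := None,
        mid := (if fmL st \<or> fmR st then mid st else None),
        nl := (if fl st then nl st else None),
        nr := (if fr st then nr st else None)\<rparr>)"

definition send_left :: "agent_state \<Rightarrow> msg option" where
  "send_left st = (if fmL st \<or> fr st then
     Some (if fmL st then map_option Suc (mid st) else None,
           if fr st then map_option Suc (nr st) else None) else None)"

definition send_right :: "agent_state \<Rightarrow> msg option" where
  "send_right st = (if fmR st \<or> fl st then
     Some (if fmR st then map_option Suc (mid st) else None,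
           if fl st then map_option Suc (nl st) else None) else None)"

definition init_start :: "nat \<Rightarrow> bool \<Rightarrow> bool \<Rightarrow> agent_state" where
  "init_start k isL isR = gc (decide k isL isR
     \<lparr>awake = True, mid = Some 0, tm = Some 0,
      nl = (if isL then Some 0 else None), nr = (if isR then Some 0 else None), col = None,
      fromL = False, fmL = (\<not> isL), fmR = (\<not> isR),
      fl = (isL \<and> \<not> isR), fr = (isR \<and> \<not> isL)\<rparr>)"

definition wake :: "bool \<Rightarrow> bool \<Rightarrow> agent_state \<Rightarrow> msg option \<Rightarrow> msg option \<Rightarrow> agent_state" where
  "wake isL isR s0 inL inR =
    (let sw = (case inL of
                 Some (Some m, _) \<Rightarrow> s0\<lparr>mid := Some m, tm := Some m, fromL := True, fmR := (\<not> isR)\<rparr>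
               | _ \<Rightarrow> (case inR of
                     Some (Some m, _) \<Rightarrow> s0\<lparr>mid := Some m, tm := Some m, fromL := False, fmL := (\<not> isL)\<rparr>
                   | _ \<Rightarrow> s0))
     in sw\<lparr>awake := True,
           nl := (if isL then Some 0 else nl sw), nr := (if isR then Some 0 else nr sw),
           fl := (isL \<and> \<not> isR), fr := (isR \<and> \<not> isL)\<rparr>)"

definition receive_waves :: "bool \<Rightarrow> bool \<Rightarrow> agent_state \<Rightarrow> msg option \<Rightarrow> msg option \<Rightarrow> agent_state" where
  "receive_waves isL isR s1 inL inR =
    (let sa = (case inL of
                 Some (_, Some v) \<Rightarrow> if nl s1 = None then s1\<lparr>nl := Some v, fl := (\<not> isR)\<rparr> else s1
               | _ \<Rightarrow> s1)
     in case inR of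
          Some (_, Some v) \<Rightarrow> if nr sa = None then sa\<lparr>nr := Some v, fr := (\<not> isL)\<rparr> else sa
        | _ \<Rightarrow> sa)"

definition step :: "nat \<Rightarrow> bool \<Rightarrow> bool \<Rightarrow> agent_state \<Rightarrow> msg option \<Rightarrow> msg option \<Rightarrow> agent_state" where
  "step k isL isR st inL inR =
    (let s0 = st\<lparr>fmL := False, fmR := False, fl := False, fr := False\<rparr>;
         s1 = (if \<not> awake st then
                 (if inL = None \<and> inR = None then s0 else wake isL isR s0 inL inR)
               else s0\<lparr>tm := map_option Suc (tm s0)\<rparr>);
         s2 = (if col st = None then receive_waves isL isR s1 inL inR else s1)
     in gc (decide k isL isR s2))"

primrec exec :: "nat \<Rightarrow> nat \<Rightarrow> nat \<Rightarrow> nat \<Rightarrow> nat \<Rightarrow> agent_state" where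
  "exec n k s 0 = (\<lambda>i. if i = s then init_start k (i = 0) (i + 1 = n) else sleeping)"
| "exec n k s (Suc r) = (\<lambda>i. step k (i = 0) (i + 1 = n) (exec n k s r i)
     (if 0 < i then send_right (exec n k s r (i - 1)) else None)
     (if i + 1 < n then send_left (exec n k s r (i + 1)) else None))"

definition opt_bits :: "nat option \<Rightarrow> nat" where
  "opt_bits x = (case x of None \<Rightarrow> 0 | Some v \<Rightarrow> floorlog 2 v)"

definition msg_bits :: "msg option \<Rightarrow> nat" where
  "msg_bits m = (case m of None \<Rightarrow> 0 | Some (a, b) \<Rightarrow> opt_bits a + opt_bits b)"

text \<open>Bits sent in round r+1 (computed from the configuration after r rounds);
  only messages to existing neighbours count.\<close>
definition round_bits :: "nat \<Rightarrow> nat \<Rightarrow> nat \<Rightarrow> nat \<Rightarrow> nat" where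
  "round_bits n k s r = (\<Sum>i<n.
      (if 0 < i then msg_bits (send_left (exec n k s r i)) else 0) +
      (if i + 1 < n then msg_bits (send_right (exec n k s r i)) else 0))"

text \<open>Memory of a local state: one bit per boolean flag, and for every optional counter one
  bit (present/absent) plus its binary length.\<close>
definition mem_bits :: "agent_state \<Rightarrow> nat" where
  "mem_bits st = 6 + (1 + opt_bits (mid st)) + (1 + opt_bits (tm st)) + (1 + opt_bits (nl st))
      + (1 + opt_bits (nr st)) + (1 + opt_bits (col st))"

end

theory Submission
  imports Defs
begin

definition dst :: "nat \<Rightarrow> nat \<Rightarrow> nat" where
  "dst i s = (if s \<le> i then i - s else s - i)"

definition pre :: "bool \<Rightarrow> bool \<Rightarrow> agent_state \<Rightarrow> msg option \<Rightarrow> msg option \<Rightarrow> agent_state" where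
  "pre isL isR st inL inR =
    (let s0 = st\<lparr>fmL := False, fmR := False, fl := False, fr := False\<rparr>;
         s1 = (if \<not> awake st then
                 (if inL = None \<and> inR = None then s0 else wake isL isR s0 inL inR)
               else s0\<lparr>tm := map_option Suc (tm s0)\<rparr>)
     in if col st = None then receive_waves isL isR s1 inL inR else s1)"

lemma step_pre: "step k isL isR st inL inR = gc (decide k isL isR (pre isL isR st inL inR))"
  by (simp add: step_def pre_def Let_def)

lemma decide_fields:
  "awake (decide k a b st) = awake st" "mid (decide k a b st) = mid st" "tm (decide k a b st) = tm st"
  "nl (decide k a b st) = nl st" "nr (decide k a b st) = nr st" "fromL (decide k a b st) = fromL st"
  "fmL (decide k a b st) = fmL st" "fmR (decide k a b st) = fmR st"
  "fl (decide k a b st) = fl st" "fr (decide k a b st) = fr st"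
  by (auto simp: decide_def split: option.split)


lemma decide_some: "col st \<noteq> None \<Longrightarrow> decide k a b st = st"
  by (simp add: decide_def)

lemma decide_none: "col (decide k a b st) = None \<Longrightarrow> decide k a b st = st"
  unfolding decide_def by (auto split: option.split_asm if_split_asm)

lemma decide_idem: "decide k a b (decide k a b st) = decide k a b st"
  by (metis decide_none decide_some)

lemma gc_fields:
  "awake (gc st) = awake st" "col (gc st) = col st" "fromL (gc st) = fromL st"
  "fmL (gc st) = fmL st" "fmR (gc st) = fmR st" "fl (gc st) = fl st" "fr (gc st) = fr st"
  "tm (gc st) = (if col st = None then tm st else None)"
  "mid (gc st) = (if col st = None \<or> fmL st \<or> fmR st then mid st else None)"
  "nl (gc st) = (if col st = None \<or> fl st then nl st else None)"
  "nr (gc st) = (if col st = None \<or> fr st then nr st else None)"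
  by (auto simp: gc_def)

lemma gc_none: "col st = None \<Longrightarrow> gc st = st" by (simp add: gc_def)


lemma dec_new:
  assumes "col st = None" "col (decide k a b st) = Some c"
  shows "(a \<and> c = 1) \<or> (\<not>a \<and> b \<and> c = k) \<or>
    (\<not>a \<and> \<not>b \<and> (\<exists>x y. nl st = Some x \<and> nr st = Some y \<and> c = ribbon_color (x+y+1) k x)) \<or>
    (\<not>a \<and> \<not>b \<and> (\<exists>x m t. nl st = Some x \<and> nr st = None \<and> mid st = Some m \<and> tm st = Some t \<and> c = 1 \<and>
        (if fromL st then 2 * (k - 1) * x + m \<le> t else 2 * (k - 1) * x \<le> t + m))) \<or>
    (\<not>a \<and> \<not>b \<and> (\<exists>y m t. nl st = None \<and> nr st = Some y \<and> mid st = Some m \<and> tm st = Some t \<and> c = k \<and>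
        (if fromL st then 2 * (k - 1) * y \<le> t + m else 2 * (k - 1) * y + m \<le> t)))"
proof (cases a)
  case True thus ?thesis using assms by (simp add: decide_def)
next
  case a: False
  show ?thesis
  proof (cases b)
    case True thus ?thesis using assms a by (simp add: decide_def)
  next
    case b: False
    show ?thesis
      using assms a b
      by (cases "nl st"; cases "nr st"; cases "mid st"; cases "tm st"; simp add: decide_def split: if_split_asm)
  qed
qed

lemma dec_none_cases:
  assumes "col st = None" "col (decide k a b st) = None"
  shows "\<not> a \<and> \<not> b \<and> (nl st = None \<or> nr st = None)"
  using assms by (cases a; cases b; cases "nl st"; cases "nr st"; cases "mid st"; cases "tm st"; simp add: decide_def split: if_split_asm)


definition Lt :: "nat \<Rightarrow> nat \<Rightarrow> nat" where "Lt s i = s + i"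
definition Rt :: "nat \<Rightarrow> nat \<Rightarrow> nat \<Rightarrow> nat" where "Rt n s i = (n-1-s)+(n-1-i)"

definition hA :: "nat \<Rightarrow> nat \<Rightarrow> nat \<Rightarrow> nat \<Rightarrow> nat \<Rightarrow> agent_state \<Rightarrow> bool" where
  "hA n k s r i st \<longleftrightarrow> (awake st \<longleftrightarrow> dst i s \<le> r)"

definition hS :: "nat \<Rightarrow> nat \<Rightarrow> nat \<Rightarrow> nat \<Rightarrow> nat \<Rightarrow> agent_state \<Rightarrow> bool" where
  "hS n k s r i st \<longleftrightarrow> (\<not> awake st \<longrightarrow> mid st = None \<and> tm st = None \<and> nl st = None \<and> nr st = None \<and> \<not>fmL st \<and> \<not>fmR st \<and> \<not>fl st \<and> \<not>fr st \<and> (col st \<noteq> None \<longrightarrow> i = 0 \<or> i+1 = n))"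

definition hU :: "nat \<Rightarrow> nat \<Rightarrow> nat \<Rightarrow> nat \<Rightarrow> nat \<Rightarrow> agent_state \<Rightarrow> bool" where
  "hU n k s r i st \<longleftrightarrow> (awake st \<and> col st = None \<longrightarrow> mid st = Some (dst i s) \<and> tm st = Some r \<and> fromL st = (s < i))"

definition hNL :: "nat \<Rightarrow> nat \<Rightarrow> nat \<Rightarrow> nat \<Rightarrow> nat \<Rightarrow> agent_state \<Rightarrow> bool" where
  "hNL n k s r i st \<longleftrightarrow> (nl st = None \<or> (nl st = Some i \<and> Lt s i \<le> r))"

definition hNR :: "nat \<Rightarrow> nat \<Rightarrow> nat \<Rightarrow> nat \<Rightarrow> nat \<Rightarrow> agent_state \<Rightarrow> bool" where
  "hNR n k s r i st \<longleftrightarrow> (nr st = None \<or> (nr st = Some (n-1-i) \<and> Rt n s i \<le> r))"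

definition hFR :: "nat \<Rightarrow> nat \<Rightarrow> nat \<Rightarrow> nat \<Rightarrow> nat \<Rightarrow> agent_state \<Rightarrow> bool" where
  "hFR n k s r i st \<longleftrightarrow> (fmR st \<longleftrightarrow> r = dst i s \<and> s \<le> i \<and> i+1 < n)"

definition hFL :: "nat \<Rightarrow> nat \<Rightarrow> nat \<Rightarrow> nat \<Rightarrow> nat \<Rightarrow> agent_state \<Rightarrow> bool" where
  "hFL n k s r i st \<longleftrightarrow> (fmL st \<longleftrightarrow> r = dst i s \<and> i \<le> s \<and> 0 < i)"

definition hM :: "nat \<Rightarrow> nat \<Rightarrow> nat \<Rightarrow> nat \<Rightarrow> nat \<Rightarrow> agent_state \<Rightarrow> bool" where
  "hM n k s r i st \<longleftrightarrow> (mid st = None \<or> mid st = Some (dst i s))"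

definition hMF :: "nat \<Rightarrow> nat \<Rightarrow> nat \<Rightarrow> nat \<Rightarrow> nat \<Rightarrow> agent_state \<Rightarrow> bool" where
  "hMF n k s r i st \<longleftrightarrow> (fmR st \<or> fmL st \<longrightarrow> mid st = Some (dst i s))"

definition hfl :: "nat \<Rightarrow> nat \<Rightarrow> nat \<Rightarrow> nat \<Rightarrow> nat \<Rightarrow> agent_state \<Rightarrow> bool" where
  "hfl n k s r i st \<longleftrightarrow> (fl st \<longrightarrow> nl st = Some i \<and> r = Lt s i \<and> i+1 < n)"

definition hfr :: "nat \<Rightarrow> nat \<Rightarrow> nat \<Rightarrow> nat \<Rightarrow> nat \<Rightarrow> agent_state \<Rightarrow> bool" where
  "hfr n k s r i st \<longleftrightarrow> (fr st \<longrightarrow> nr st = Some (n-1-i) \<and> r = Rt n s i \<and> 0 < i)"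

definition hW0 :: "nat \<Rightarrow> nat \<Rightarrow> nat \<Rightarrow> nat \<Rightarrow> nat \<Rightarrow> agent_state \<Rightarrow> bool" where
  "hW0 n k s r i st \<longleftrightarrow> (i = 0 \<and> i+1 < n \<and> r = dst i s \<longrightarrow> fl st)"

definition hWn :: "nat \<Rightarrow> nat \<Rightarrow> nat \<Rightarrow> nat \<Rightarrow> nat \<Rightarrow> agent_state \<Rightarrow> bool" where
  "hWn n k s r i st \<longleftrightarrow> (i+1 = n \<and> 0 < i \<and> r = dst i s \<longrightarrow> fr st)"

definition hC1 :: "nat \<Rightarrow> nat \<Rightarrow> nat \<Rightarrow> nat \<Rightarrow> nat \<Rightarrow> agent_state \<Rightarrow> bool" where
  "hC1 n k s r i st \<longleftrightarrow> (col st = None \<or> col st = Some 1 \<or> Rt n s i \<le> r \<or> i+1 = n)"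

definition hCk :: "nat \<Rightarrow> nat \<Rightarrow> nat \<Rightarrow> nat \<Rightarrow> nat \<Rightarrow> agent_state \<Rightarrow> bool" where
  "hCk n k s r i st \<longleftrightarrow> (col st = None \<or> col st = Some k \<or> Lt s i \<le> r \<or> i = 0)"

definition hCI :: "nat \<Rightarrow> nat \<Rightarrow> nat \<Rightarrow> nat \<Rightarrow> nat \<Rightarrow> agent_state \<Rightarrow> bool" where
  "hCI n k s r i st \<longleftrightarrow> (col st = None \<or> i = 0 \<or> i+1 = n \<or> Lt s i \<le> r \<or> Rt n s i \<le> r)"

definition hE0 :: "nat \<Rightarrow> nat \<Rightarrow> nat \<Rightarrow> nat \<Rightarrow> nat \<Rightarrow> agent_state \<Rightarrow> bool" where
  "hE0 n k s r i st \<longleftrightarrow> (i = 0 \<longrightarrow> col st = None \<or> col st = Some 1)"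

definition hEn :: "nat \<Rightarrow> nat \<Rightarrow> nat \<Rightarrow> nat \<Rightarrow> nat \<Rightarrow> agent_state \<Rightarrow> bool" where
  "hEn n k s r i st \<longleftrightarrow> (i \<noteq> 0 \<longrightarrow> i+1 = n \<longrightarrow> col st = None \<or> col st = Some k)"

definition gD :: "nat \<Rightarrow> nat \<Rightarrow> nat \<Rightarrow> nat \<Rightarrow> nat \<Rightarrow> agent_state \<Rightarrow> bool" where
  "gD n k s r i st \<longleftrightarrow> (awake st \<and> col st = None \<longrightarrow> decide k (i=0) (i+1=n) st = st)"

definition gB :: "nat \<Rightarrow> nat \<Rightarrow> nat \<Rightarrow> nat \<Rightarrow> nat \<Rightarrow> agent_state \<Rightarrow> bool" where
  "gB n k s r i st \<longleftrightarrow> (col st = None \<longrightarrow> nl st = None \<or> nr st = None)"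

definition gE :: "nat \<Rightarrow> nat \<Rightarrow> nat \<Rightarrow> nat \<Rightarrow> nat \<Rightarrow> agent_state \<Rightarrow> bool" where
  "gE n k s r i st \<longleftrightarrow> (awake st \<longrightarrow> (i = 0 \<or> i+1 = n) \<longrightarrow> col st \<noteq> None)"

definition gT :: "nat \<Rightarrow> nat \<Rightarrow> nat \<Rightarrow> nat \<Rightarrow> nat \<Rightarrow> agent_state \<Rightarrow> bool" where
  "gT n k s r i st \<longleftrightarrow> (tm st \<noteq> None \<longrightarrow> col st = None)"

definition H :: "nat \<Rightarrow> nat \<Rightarrow> nat \<Rightarrow> nat \<Rightarrow> nat \<Rightarrow> agent_state \<Rightarrow> bool" where
  "H n k s r i st \<longleftrightarrow> hA n k s r i st \<and> hS n k s r i st \<and> hU n k s r i st \<and> hNL n k s r i st \<and> hNR n k s r i st \<and> hFR n k s r i st \<and> hFL n k s r i st \<and> hM n k s r i st \<and> hMF n k s r i st \<and> hfl n k s r i st \<and> hfr n k s r i st \<and> hW0 n k s r i st \<and> hWn n k s r i st \<and> hC1 n k s r i st \<and> hCk n k s r i st \<and> hCI n k s r i st \<and> hE0 n k s r i st \<and> hEn n k s r i st"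

definition G :: "nat \<Rightarrow> nat \<Rightarrow> nat \<Rightarrow> nat \<Rightarrow> nat \<Rightarrow> agent_state \<Rightarrow> bool" where
  "G n k s r i st \<longleftrightarrow> H n k s r i st \<and> gD n k s r i st \<and> gB n k s r i st \<and> gE n k s r i st \<and> gT n k s r i st"

lemma G_final_False:
  assumes HH: "H n k s r i st" and F: "col st \<noteq> None"
  shows "G n k s r i (gc (decide k (i=0) (i+1=n) st))"
proof -
  have D: "decide k (i=0) (i+1=n) st = st" using F by (simp add: decide_def)
  have x1: "hA n k s r i (gc st)" using HH F unfolding H_def hA_def gc_fields by auto
  have x2: "hS n k s r i (gc st)" using HH F unfolding H_def hS_def gc_fields by auto
  have x3: "hU n k s r i (gc st)" using HH F unfolding H_def hU_def gc_fields by auto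
  have x4: "hNL n k s r i (gc st)" using HH F unfolding H_def hNL_def gc_fields by auto
  have x5: "hNR n k s r i (gc st)" using HH F unfolding H_def hNR_def gc_fields by auto
  have x6: "hFR n k s r i (gc st)" using HH F unfolding H_def hFR_def gc_fields by auto
  have x7: "hFL n k s r i (gc st)" using HH F unfolding H_def hFL_def gc_fields by auto
  have x8: "hM n k s r i (gc st)" using HH F unfolding H_def hM_def gc_fields by auto
  have x9: "hMF n k s r i (gc st)" using HH F unfolding H_def hMF_def gc_fields by auto
  have x10: "hfl n k s r i (gc st)" using HH F unfolding H_def hfl_def gc_fields by auto
  have x11: "hfr n k s r i (gc st)" using HH F unfolding H_def hfr_def gc_fields by auto
  have x12: "hW0 n k s r i (gc st)" using HH F unfolding H_def hW0_def gc_fields by auto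
  have x13: "hWn n k s r i (gc st)" using HH F unfolding H_def hWn_def gc_fields by auto
  have x14: "hC1 n k s r i (gc st)" using HH F unfolding H_def hC1_def gc_fields by auto
  have x15: "hCk n k s r i (gc st)" using HH F unfolding H_def hCk_def gc_fields by auto
  have x16: "hCI n k s r i (gc st)" using HH F unfolding H_def hCI_def gc_fields by auto
  have x17: "hE0 n k s r i (gc st)" using HH F unfolding H_def hE0_def gc_fields by auto
  have x18: "hEn n k s r i (gc st)" using HH F unfolding H_def hEn_def gc_fields by auto
  have x19: "gD n k s r i (gc st)" using F unfolding gD_def gc_fields by auto
  have x20: "gB n k s r i (gc st)" using F unfolding gB_def gc_fields by auto
  have x21: "gE n k s r i (gc st)" using F unfolding gE_def gc_fields by auto
  have x22: "gT n k s r i (gc st)" using F unfolding gT_def gc_fields by auto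
  thus ?thesis unfolding D G_def H_def using x1 x2 x3 x4 x5 x6 x7 x8 x9 x10 x11 x12 x13 x14 x15 x16 x17 x18 x19 x20 x21 x22 by blast
qed


lemma G_final_None:
  assumes HH: "H n k s r i st" and cn: "col st = None" and cd: "col (decide k (i=0) (i+1=n) st) = None"
  shows "G n k s r i (gc (decide k (i=0) (i+1=n) st))"
proof -
  have D: "decide k (i=0) (i+1=n) st = st" using cd by (rule decide_none)
  have nb: "i \<noteq> 0 \<and> i+1 \<noteq> n \<and> (nl st = None \<or> nr st = None)" using dec_none_cases[OF cn cd] by simp
  show ?thesis unfolding D gc_none[OF cn] G_def using HH cn D nb unfolding gD_def gB_def gE_def gT_def by auto
qed

lemma G_final_Some:
  assumes HH: "H n k s r i st" and cn: "col st = None" and cd: "col (decide k (i=0) (i+1=n) st) = Some c"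
  shows "G n k s r i (gc (decide k (i=0) (i+1=n) st))"
proof -
  let ?X = "gc (decide k (i=0) (i+1=n) st)"
  have F: "col ?X = Some c" "tm ?X = None" "awake ?X = awake st" "fromL ?X = fromL st"
    "fmL ?X = fmL st" "fmR ?X = fmR st" "fl ?X = fl st" "fr ?X = fr st"
    "mid ?X = (if fmL st \<or> fmR st then mid st else None)"
    "nl ?X = (if fl st then nl st else None)" "nr ?X = (if fr st then nr st else None)"
    using cd by (auto simp: gc_fields decide_fields)
  have dn: "(i = 0 \<and> c = 1) \<or> (i \<noteq> 0 \<and> i+1 = n \<and> c = k) \<or>
      (i \<noteq> 0 \<and> i+1 \<noteq> n \<and> (\<exists>x y. nl st = Some x \<and> nr st = Some y)) \<or>
      (i \<noteq> 0 \<and> i+1 \<noteq> n \<and> (\<exists>x. nl st = Some x \<and> c = 1)) \<or>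
      (i \<noteq> 0 \<and> i+1 \<noteq> n \<and> (\<exists>y. nr st = Some y \<and> c = k))"
    using dec_new[OF cn cd] by blast
  have sl: "\<not> awake st \<Longrightarrow> (i = 0 \<or> i+1 = n)"
    using dn HH unfolding H_def hS_def by auto
  have x1: "hA n k s r i ?X" using HH dn sl unfolding H_def hA_def F by auto
  have x2: "hS n k s r i ?X" using HH dn sl unfolding H_def hS_def F by auto
  have x3: "hU n k s r i ?X" using HH dn sl unfolding H_def hU_def F by auto
  have x4: "hNL n k s r i ?X" using HH dn sl unfolding H_def hNL_def F by auto
  have x5: "hNR n k s r i ?X" using HH dn sl unfolding H_def hNR_def F by auto
  have x6: "hFR n k s r i ?X" using HH dn sl unfolding H_def hFR_def F by auto
  have x7: "hFL n k s r i ?X" using HH dn sl unfolding H_def hFL_def F by auto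
  have x8: "hM n k s r i ?X" using HH dn sl unfolding H_def hM_def F by auto
  have x9: "hMF n k s r i ?X" using HH dn sl unfolding H_def hMF_def F by auto
  have x10: "hfl n k s r i ?X" using HH dn sl unfolding H_def hfl_def F by auto
  have x11: "hfr n k s r i ?X" using HH dn sl unfolding H_def hfr_def F by auto
  have x12: "hW0 n k s r i ?X" using HH dn sl unfolding H_def hW0_def F by auto
  have x13: "hWn n k s r i ?X" using HH dn sl unfolding H_def hWn_def F by auto
  have x14: "hC1 n k s r i ?X" using HH dn sl unfolding H_def hC1_def hNR_def F by auto
  have x15: "hCk n k s r i ?X" using HH dn sl unfolding H_def hCk_def hNL_def F by auto
  have x16: "hCI n k s r i ?X" using HH dn sl unfolding H_def hCI_def hNL_def hNR_def F by auto
  have x17: "hE0 n k s r i ?X" using HH dn sl unfolding H_def hE0_def F by auto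
  have x18: "hEn n k s r i ?X" using HH dn sl unfolding H_def hEn_def F by auto
  have x19: "gD n k s r i ?X" unfolding gD_def F by auto
  have x20: "gB n k s r i ?X" unfolding gB_def F by auto
  have x21: "gE n k s r i ?X" unfolding gE_def F by auto
  have x22: "gT n k s r i ?X" unfolding gT_def F by auto
  show ?thesis unfolding G_def H_def using x1 x2 x3 x4 x5 x6 x7 x8 x9 x10 x11 x12 x13 x14 x15 x16 x17 x18 x19 x20 x21 x22 by blast
qed

lemma G_final:
  assumes HH: "H n k s r i st"
  shows "G n k s r i (gc (decide k (i=0) (i+1=n) st))"
  using G_final_False[OF HH] G_final_None[OF HH] G_final_Some[OF HH]
  by (cases "col st"; cases "col (decide k (i=0) (i+1=n) st)") auto


definition mv :: "msg option \<Rightarrow> nat option" where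
  "mv m = (case m of Some (Some x, _) \<Rightarrow> Some x | _ \<Rightarrow> None)"
definition lv :: "msg option \<Rightarrow> nat option" where
  "lv m = (case m of Some (_, Some v) \<Rightarrow> Some v | _ \<Rightarrow> None)"

lemma rw_fields:
  "awake (receive_waves a b st inL inR) = awake st" "mid (receive_waves a b st inL inR) = mid st"
  "tm (receive_waves a b st inL inR) = tm st" "col (receive_waves a b st inL inR) = col st"
  "fromL (receive_waves a b st inL inR) = fromL st" "fmL (receive_waves a b st inL inR) = fmL st"
  "fmR (receive_waves a b st inL inR) = fmR st"
  "nl (receive_waves a b st inL inR) = (if nl st = None \<and> lv inL \<noteq> None then lv inL else nl st)"
  "fl (receive_waves a b st inL inR) = (if nl st = None \<and> lv inL \<noteq> None then \<not> b else fl st)"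
  "nr (receive_waves a b st inL inR) = (if nr st = None \<and> lv inR \<noteq> None then lv inR else nr st)"
  "fr (receive_waves a b st inL inR) = (if nr st = None \<and> lv inR \<noteq> None then \<not> a else fr st)"
  unfolding receive_waves_def Let_def lv_def
  by (auto split: option.split prod.split)

lemma wake_fields:
  "awake (wake a b st inL inR) = True" "col (wake a b st inL inR) = col st"
  "mid (wake a b st inL inR) = (if mv inL \<noteq> None then mv inL else if mv inR \<noteq> None then mv inR else mid st)"
  "tm (wake a b st inL inR) = (if mv inL \<noteq> None then mv inL else if mv inR \<noteq> None then mv inR else tm st)"
  "fromL (wake a b st inL inR) = (if mv inL \<noteq> None then True else if mv inR \<noteq> None then False else fromL st)"
  "fmR (wake a b st inL inR) = (if mv inL \<noteq> None then \<not> b else fmR st)"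
  "fmL (wake a b st inL inR) = (if mv inL = None \<and> mv inR \<noteq> None then \<not> a else fmL st)"
  "nl (wake a b st inL inR) = (if a then Some 0 else nl st)"
  "nr (wake a b st inL inR) = (if b then Some 0 else nr st)"
  "fl (wake a b st inL inR) = (a \<and> \<not> b)" "fr (wake a b st inL inR) = (b \<and> \<not> a)"
  unfolding wake_def Let_def mv_def
  by (auto split: option.split prod.split)

lemma pre_fields:
  fixes st inL inR a b
  defines "W \<equiv> \<not> awake st \<and> (inL \<noteq> None \<or> inR \<noteq> None)"
  defines "nl1 \<equiv> (if W \<and> a then Some 0 else nl st)"
  defines "nr1 \<equiv> (if W \<and> b then Some 0 else nr st)"
  defines "fl1 \<equiv> W \<and> a \<and> \<not> b"
  defines "fr1 \<equiv> W \<and> b \<and> \<not> a"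
  defines "C \<equiv> col st = None"
  shows
  "awake (pre a b st inL inR) = (awake st \<or> W)" "col (pre a b st inL inR) = col st"
  "mid (pre a b st inL inR) = (if W then (if mv inL \<noteq> None then mv inL else if mv inR \<noteq> None then mv inR else mid st) else mid st)"
  "tm (pre a b st inL inR) = (if awake st then map_option Suc (tm st) else if W then (if mv inL \<noteq> None then mv inL else if mv inR \<noteq> None then mv inR else tm st) else tm st)"
  "fromL (pre a b st inL inR) = (if W then (if mv inL \<noteq> None then True else if mv inR \<noteq> None then False else fromL st) else fromL st)"
  "fmR (pre a b st inL inR) = (W \<and> mv inL \<noteq> None \<and> \<not> b)"
  "fmL (pre a b st inL inR) = (W \<and> mv inL = None \<and> mv inR \<noteq> None \<and> \<not> a)"
  "nl (pre a b st inL inR) = (if C \<and> nl1 = None \<and> lv inL \<noteq> None then lv inL else nl1)"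
  "fl (pre a b st inL inR) = (if C \<and> nl1 = None \<and> lv inL \<noteq> None then \<not> b else fl1)"
  "nr (pre a b st inL inR) = (if C \<and> nr1 = None \<and> lv inR \<noteq> None then lv inR else nr1)"
  "fr (pre a b st inL inR) = (if C \<and> nr1 = None \<and> lv inR \<noteq> None then \<not> a else fr1)"
  unfolding pre_def Let_def W_def nl1_def nr1_def fl1_def fr1_def C_def
  by (auto simp: rw_fields wake_fields)

definition msgL :: "nat \<Rightarrow> nat \<Rightarrow> nat \<Rightarrow> nat \<Rightarrow> msg option \<Rightarrow> bool" where
  "msgL n s r i m \<longleftrightarrow> (m \<noteq> None \<longrightarrow> dst i s \<le> Suc r) \<and>
     (\<forall>x. mv m = Some x \<longrightarrow> x = dst i s \<and> s < i \<and> Suc r = dst i s) \<and>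
     (\<forall>v. lv m = Some v \<longrightarrow> v = i \<and> Suc r = Lt s i) \<and>
     (s < i \<and> Suc r = dst i s \<longrightarrow> mv m = Some (dst i s)) \<and> (i = 0 \<longrightarrow> m = None)"

definition msgR :: "nat \<Rightarrow> nat \<Rightarrow> nat \<Rightarrow> nat \<Rightarrow> msg option \<Rightarrow> bool" where
  "msgR n s r i m \<longleftrightarrow> (m \<noteq> None \<longrightarrow> dst i s \<le> Suc r) \<and>
     (\<forall>x. mv m = Some x \<longrightarrow> x = dst i s \<and> i < s \<and> Suc r = dst i s) \<and>
     (\<forall>v. lv m = Some v \<longrightarrow> v = n-1-i \<and> Suc r = Rt n s i) \<and>
     (i < s \<and> Suc r = dst i s \<longrightarrow> mv m = Some (dst i s)) \<and> (i + 1 = n \<longrightarrow> m = None)"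

lemma dst_simps:
  "dst i s = 0 \<longleftrightarrow> i = s" "dst 0 s = s" "Lt s 0 = s"
  "s < n \<Longrightarrow> i + 1 = n \<Longrightarrow> dst i s = n - 1 - s"
  "s < n \<Longrightarrow> i + 1 = n \<Longrightarrow> Rt n s i = n - 1 - s"
  unfolding dst_def Lt_def Rt_def by auto

lemma dst_le_Lt: "dst i s \<le> Lt s i" unfolding dst_def Lt_def by auto
lemma dst_le_Rt: "s < n \<Longrightarrow> i < n \<Longrightarrow> dst i s \<le> Rt n s i" unfolding dst_def Rt_def by auto

lemma H_pre:
  assumes G: "G n k s r i st" and i: "i < n" and sn: "s < n"
    and mL: "msgL n s r i inL" and mR: "msgR n s r i inR"
  shows "H n k s (Suc r) i (pre (i=0) (i+1=n) st inL inR)"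
proof -
  let ?P = "pre (i=0) (i+1=n) st inL inR"
  have hh: "hA n k s r i st" "hS n k s r i st" "hU n k s r i st" "hNL n k s r i st" "hNR n k s r i st"
     "hFR n k s r i st" "hFL n k s r i st" "hM n k s r i st" "hMF n k s r i st" "hfl n k s r i st"
     "hfr n k s r i st" "hW0 n k s r i st" "hWn n k s r i st" "hC1 n k s r i st" "hCk n k s r i st"
     "hCI n k s r i st" "hE0 n k s r i st" "hEn n k s r i st"
    using G unfolding G_def H_def by auto
  define W where "W = (\<not> awake st \<and> (inL \<noteq> None \<or> inR \<noteq> None))"
  have mL1: "inL \<noteq> None \<Longrightarrow> dst i s \<le> Suc r" using mL unfolding msgL_def by blast
  have mL2: "\<And>x. mv inL = Some x \<Longrightarrow> x = dst i s \<and> s < i \<and> Suc r = dst i s" using mL unfolding msgL_def by blast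
  have mL3: "\<And>v. lv inL = Some v \<Longrightarrow> v = i \<and> Suc r = Lt s i" using mL unfolding msgL_def by blast
  have mL4: "s < i \<Longrightarrow> Suc r = dst i s \<Longrightarrow> mv inL = Some (dst i s)" using mL unfolding msgL_def by blast
  have mL5: "i = 0 \<Longrightarrow> inL = None" using mL unfolding msgL_def by blast
  have mR1: "inR \<noteq> None \<Longrightarrow> dst i s \<le> Suc r" using mR unfolding msgR_def by blast
  have mR2: "\<And>x. mv inR = Some x \<Longrightarrow> x = dst i s \<and> i < s \<and> Suc r = dst i s" using mR unfolding msgR_def by blast
  have mR3: "\<And>v. lv inR = Some v \<Longrightarrow> v = n-1-i \<and> Suc r = Rt n s i" using mR unfolding msgR_def by blast
  have mR4: "i < s \<Longrightarrow> Suc r = dst i s \<Longrightarrow> mv inR = Some (dst i s)" using mR unfolding msgR_def by blast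
  have mR5: "i + 1 = n \<Longrightarrow> inR = None" using mR unfolding msgR_def by blast
  have hA0: "awake st \<longleftrightarrow> dst i s \<le> r" using hh(1) unfolding hA_def .
  have w1: "W \<Longrightarrow> dst i s = Suc r"
  proof -
    assume W
    hence "\<not> awake st" "inL \<noteq> None \<or> inR \<noteq> None" unfolding W_def by auto
    hence "\<not> dst i s \<le> r" "dst i s \<le> Suc r" using hA0 mL1 mR1 by auto
    thus ?thesis by linarith
  qed
  have mvN: "\<And>m. mv m \<noteq> None \<Longrightarrow> m \<noteq> None" by (auto simp: mv_def split: option.split_asm)
  have w2: "\<not> awake st \<Longrightarrow> dst i s = Suc r \<Longrightarrow> W"
  proof -
    assume a: "\<not> awake st" "dst i s = Suc r"
    have "i \<noteq> s" proof assume "i = s" hence "dst i s = 0" by (simp add: dst_def) with a show False by simp qed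
    hence "s < i \<or> i < s" by auto
    hence "inL \<noteq> None \<or> inR \<noteq> None"
    proof
      assume "s < i" hence "mv inL = Some (dst i s)" using mL4 a(2) by simp
      thus ?thesis using mvN by blast
    next
      assume "i < s" hence "mv inR = Some (dst i s)" using mR4 a(2) by simp
      thus ?thesis using mvN by blast
    qed
    thus W using a(1) unfolding W_def by blast
  qed
  have aw: "awake ?P = (awake st \<or> W)" unfolding W_def by (simp add: pre_fields)
  have wn: "W \<Longrightarrow> \<not> awake st" unfolding W_def by simp
  note PF = pre_fields[where a="i=0" and b="i+1=n" and st=st and inL=inL and inR=inR, folded W_def]
  have lvN: "lv None = None" "mv None = None" by (simp_all add: lv_def mv_def)
  have nW: "\<not> awake st \<Longrightarrow> \<not> W \<Longrightarrow> inL = None \<and> inR = None" unfolding W_def by blast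
  have hA0: "hA n k s r i st" using hh(1) .
  have hS0: "hS n k s r i st" using hh(2) .
  have hU0: "hU n k s r i st" using hh(3) .
  have hNL0: "hNL n k s r i st" using hh(4) .
  have hNR0: "hNR n k s r i st" using hh(5) .
  have hFR0: "hFR n k s r i st" using hh(6) .
  have hFL0: "hFL n k s r i st" using hh(7) .
  have hM0: "hM n k s r i st" using hh(8) .
  have hMF0: "hMF n k s r i st" using hh(9) .
  have hfl0: "hfl n k s r i st" using hh(10) .
  have hfr0: "hfr n k s r i st" using hh(11) .
  have hW00: "hW0 n k s r i st" using hh(12) .
  have hWn0: "hWn n k s r i st" using hh(13) .
  have hC10: "hC1 n k s r i st" using hh(14) .
  have hCk0: "hCk n k s r i st" using hh(15) .
  have hCI0: "hCI n k s r i st" using hh(16) .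
  have hE00: "hE0 n k s r i st" using hh(17) .
  have hEn0: "hEn n k s r i st" using hh(18) .

  have x_hA: "hA n k s (Suc r) i ?P" unfolding hA_def aw
  proof (cases "awake st")
    case True thus "(awake st \<or> W) = (dst i s \<le> Suc r)" using hA0 unfolding hA_def by auto
  next
    case False
    hence "\<not> dst i s \<le> r" using hA0 unfolding hA_def by auto
    thus "(awake st \<or> W) = (dst i s \<le> Suc r)" using False w1 w2 by (auto simp: le_Suc_eq)
  qed
  have x_hS: "hS n k s (Suc r) i ?P" unfolding hS_def aw
  proof
    assume a: "\<not> (awake st \<or> W)"
    hence io: "inL = None" "inR = None" using nW by auto
    show "mid ?P = None \<and> tm ?P = None \<and> nl ?P = None \<and> nr ?P = None \<and> \<not> fmL ?P \<and> \<not> fmR ?P \<and> \<not> fl ?P \<and> \<not> fr ?P \<and> (col ?P \<noteq> None \<longrightarrow> i = 0 \<or> i + 1 = n)"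
      using hS0 a unfolding hS_def PF by (simp add: io lvN)
  qed
  have d: "W \<Longrightarrow> dst i s = Suc r" by (rule w1)
  have nA: "dst i s = Suc r \<Longrightarrow> \<not> awake st" using hA0 unfolding hA_def by simp
  have ns: "dst i s = Suc r \<Longrightarrow> i \<noteq> s" by (auto simp: dst_def)
  have x_hU: "hU n k s (Suc r) i ?P" unfolding hU_def aw
  proof (cases "awake st")
    case True
    hence "\<not> W" using wn by blast
    thus "(awake st \<or> W) \<and> col ?P = None \<longrightarrow> mid ?P = Some (dst i s) \<and> tm ?P = Some (Suc r) \<and> fromL ?P = (s < i)"
      using hU0 True unfolding hU_def PF by simp
  next
    case False
    show "(awake st \<or> W) \<and> col ?P = None \<longrightarrow> mid ?P = Some (dst i s) \<and> tm ?P = Some (Suc r) \<and> fromL ?P = (s < i)"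
    proof
      assume "(awake st \<or> W) \<and> col ?P = None"
      hence Wt: W using False by blast
      have dd: "dst i s = Suc r" using d Wt .
      show "mid ?P = Some (dst i s) \<and> tm ?P = Some (Suc r) \<and> fromL ?P = (s < i)"
      proof (cases "mv inL")
        case (Some x)
        hence "x = dst i s" "s < i" using mL2 by auto
        thus ?thesis unfolding PF using Wt Some False dd by simp
      next
        case None
        have "\<not> s < i" using mL4 dd None by auto
        hence "i < s" using ns[OF dd] by auto
        hence mr: "mv inR = Some (dst i s)" using mR4 dd by auto
        show ?thesis unfolding PF using Wt None mr False dd \<open>i < s\<close> by simp
      qed
    qed
  qed
  have x_hNL: "hNL n k s (Suc r) i ?P" unfolding hNL_def
  proof (cases "col st = None \<and> (if W \<and> i = 0 then Some 0 else nl st) = None \<and> lv inL \<noteq> None")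
    case True
    then obtain v where v: "lv inL = Some v" by auto
    hence "v = i" "Suc r = Lt s i" using mL3 by auto
    thus "nl ?P = None \<or> nl ?P = Some i \<and> Lt s i \<le> Suc r" unfolding PF using True v by simp
  next
    case False
    hence np: "nl ?P = (if W \<and> i = 0 then Some 0 else nl st)" unfolding PF by (rule if_not_P)
    show "nl ?P = None \<or> nl ?P = Some i \<and> Lt s i \<le> Suc r"
    proof (cases "W \<and> i = 0")
      case True
      hence "Lt s i = Suc r" using d dst_simps(2,3) by auto
      thus ?thesis using np True by simp
    next
      case False
      thus ?thesis using np hNL0 unfolding hNL_def by auto
    qed
  qed
  have x_hNR: "hNR n k s (Suc r) i ?P" unfolding hNR_def
  proof (cases "col st = None \<and> (if W \<and> i+1 = n then Some 0 else nr st) = None \<and> lv inR \<noteq> None")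
    case True
    then obtain v where v: "lv inR = Some v" by auto
    hence "v = n-1-i" "Suc r = Rt n s i" using mR3 by auto
    thus "nr ?P = None \<or> nr ?P = Some (n-1-i) \<and> Rt n s i \<le> Suc r" unfolding PF using True v by simp
  next
    case False
    hence np: "nr ?P = (if W \<and> i+1 = n then Some 0 else nr st)" unfolding PF by (rule if_not_P)
    show "nr ?P = None \<or> nr ?P = Some (n-1-i) \<and> Rt n s i \<le> Suc r"
    proof (cases "W \<and> i+1 = n")
      case True
      hence "Rt n s i = Suc r" "n - 1 - i = 0" using d dst_simps(4,5)[OF sn] by auto
      thus ?thesis using np True by simp
    next
      case False
      thus ?thesis using np hNR0 unfolding hNR_def by auto
    qed
  qed
  have x_hFR: "hFR n k s (Suc r) i ?P" unfolding hFR_def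
  proof
    assume a: "fmR ?P"
    hence Wt: W and m: "mv inL \<noteq> None" and ni: "i+1 \<noteq> n" unfolding PF by auto
    then obtain x where "mv inL = Some x" by auto
    hence "s < i" "Suc r = dst i s" using mL2 by auto
    thus "Suc r = dst i s \<and> s \<le> i \<and> i + 1 < n" using ni i by auto
  next
    assume a: "Suc r = dst i s \<and> s \<le> i \<and> i + 1 < n"
    have dd: "dst i s = Suc r" using a by simp
    have "i \<noteq> s" using ns[OF dd] .
    hence "s < i" using a by simp
    hence "mv inL = Some (dst i s)" using mL4 dd by simp
    moreover have "W" using w2[OF nA[OF dd] dd] .
    ultimately show "fmR ?P" unfolding PF using a by auto
  qed
  have x_hFL: "hFL n k s (Suc r) i ?P" unfolding hFL_def
  proof
    assume a: "fmL ?P"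
    hence Wt: W and m: "mv inR \<noteq> None" and ni: "i \<noteq> 0" unfolding PF by auto
    then obtain x where "mv inR = Some x" by auto
    hence "i < s" "Suc r = dst i s" using mR2 by auto
    thus "Suc r = dst i s \<and> i \<le> s \<and> 0 < i" using ni by auto
  next
    assume a: "Suc r = dst i s \<and> i \<le> s \<and> 0 < i"
    have dd: "dst i s = Suc r" using a by simp
    have "i \<noteq> s" using ns[OF dd] .
    hence "i < s" using a by simp
    hence "mv inR = Some (dst i s)" using mR4 dd by simp
    moreover have "mv inL = None"
    proof (rule ccontr)
      assume "mv inL \<noteq> None" then obtain x where "mv inL = Some x" by auto
      hence "s < i" using mL2 by auto
      thus False using \<open>i < s\<close> by simp
    qed
    moreover have "W" using w2[OF nA[OF dd] dd] .
    ultimately show "fmL ?P" unfolding PF using a by auto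
  qed
  have midW: "W \<Longrightarrow> mid ?P = None \<or> mid ?P = Some (dst i s)"
  proof -
    assume Wt: W
    show ?thesis
    proof (cases "mv inL")
      case (Some x) thus ?thesis using mL2 unfolding PF using Wt by auto
    next
      case None
      show ?thesis
      proof (cases "mv inR")
        case (Some x) thus ?thesis using mR2 None unfolding PF using Wt by auto
      next
        case None2: None
        thus ?thesis using None Wt wn hS0 unfolding PF hS_def by auto
      qed
    qed
  qed
  have x_hM: "hM n k s (Suc r) i ?P" unfolding hM_def
    using midW hM0 unfolding hM_def PF by auto
  have x_hMF: "hMF n k s (Suc r) i ?P" unfolding hMF_def
  proof
    assume "fmR ?P \<or> fmL ?P"
    hence Wt: W and m: "mv inL \<noteq> None \<or> mv inR \<noteq> None" unfolding PF by auto
    show "mid ?P = Some (dst i s)"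
    proof (cases "mv inL")
      case (Some x) thus ?thesis using mL2 unfolding PF using Wt by auto
    next
      case None
      then obtain y where "mv inR = Some y" using m by auto
      thus ?thesis using mR2 None unfolding PF using Wt by auto
    qed
  qed
  have x_hfl: "hfl n k s (Suc r) i ?P" unfolding hfl_def
  proof
    assume a: "fl ?P"
    show "nl ?P = Some i \<and> Suc r = Lt s i \<and> i + 1 < n"
    proof (cases "col st = None \<and> (if W \<and> i = 0 then Some 0 else nl st) = None \<and> lv inL \<noteq> None")
      case True
      then obtain v where v: "lv inL = Some v" by auto
      hence "v = i" "Suc r = Lt s i" using mL3 by auto
      moreover have "i + 1 \<noteq> n" using a True unfolding PF by simp
      ultimately show ?thesis unfolding PF using True v i by simp
    next
      case False
      hence f: "fl ?P = (W \<and> i = 0 \<and> i + 1 \<noteq> n)" unfolding PF by (rule if_not_P)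
      have nn: "nl ?P = (if W \<and> i = 0 then Some 0 else nl st)" using False unfolding PF by (rule if_not_P)
      have Wi: "W" "i = 0" "i + 1 \<noteq> n" using a f by auto
      hence "Suc r = Lt s i" using d dst_simps(2,3) by auto
      thus ?thesis using nn Wi i by simp
    qed
  qed
  have x_hfr: "hfr n k s (Suc r) i ?P" unfolding hfr_def
  proof
    assume a: "fr ?P"
    show "nr ?P = Some (n-1-i) \<and> Suc r = Rt n s i \<and> 0 < i"
    proof (cases "col st = None \<and> (if W \<and> i + 1 = n then Some 0 else nr st) = None \<and> lv inR \<noteq> None")
      case True
      then obtain v where v: "lv inR = Some v" by auto
      hence "v = n-1-i" "Suc r = Rt n s i" using mR3 by auto
      moreover have "i \<noteq> 0" using a True unfolding PF by simp
      ultimately show ?thesis unfolding PF using True v by simp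
    next
      case False
      hence f: "fr ?P = (W \<and> i + 1 = n \<and> i \<noteq> 0)" unfolding PF by (rule if_not_P)
      have nn: "nr ?P = (if W \<and> i + 1 = n then Some 0 else nr st)" using False unfolding PF by (rule if_not_P)
      have Wi: "W" "i + 1 = n" "i \<noteq> 0" using a f by auto
      hence "Suc r = Rt n s i" "n - 1 - i = 0" using d dst_simps(4,5)[OF sn] by auto
      thus ?thesis using nn Wi by simp
    qed
  qed
  have x_hW0: "hW0 n k s (Suc r) i ?P" unfolding hW0_def
  proof
    assume a: "i = 0 \<and> i + 1 < n \<and> Suc r = dst i s"
    have dd: "dst i s = Suc r" using a by simp
    have Wt: W using w2[OF nA[OF dd] dd] .
    have "\<not> (col st = None \<and> (if W \<and> i = 0 then Some 0 else nl st) = None \<and> lv inL \<noteq> None)"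
      using Wt a by simp
    hence f: "fl ?P = (W \<and> i = 0 \<and> i + 1 \<noteq> n)" unfolding PF by (rule if_not_P)
    show "fl ?P" using f Wt a by simp
  qed
  have x_hWn: "hWn n k s (Suc r) i ?P" unfolding hWn_def
  proof
    assume a: "i + 1 = n \<and> 0 < i \<and> Suc r = dst i s"
    have dd: "dst i s = Suc r" using a by simp
    have Wt: W using w2[OF nA[OF dd] dd] .
    have "\<not> (col st = None \<and> (if W \<and> i + 1 = n then Some 0 else nr st) = None \<and> lv inR \<noteq> None)"
      using Wt a by simp
    hence f: "fr ?P = (W \<and> i + 1 = n \<and> i \<noteq> 0)" unfolding PF by (rule if_not_P)
    show "fr ?P" using f Wt a by simp
  qed
  have cP: "col ?P = col st" by (simp add: pre_fields)
  have x_hC1: "hC1 n k s (Suc r) i ?P" using hC10 unfolding hC1_def cP by auto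
  have x_hCk: "hCk n k s (Suc r) i ?P" using hCk0 unfolding hCk_def cP by auto
  have x_hCI: "hCI n k s (Suc r) i ?P" using hCI0 unfolding hCI_def cP by auto
  have x_hE0: "hE0 n k s (Suc r) i ?P" using hE00 unfolding hE0_def cP by auto
  have x_hEn: "hEn n k s (Suc r) i ?P" using hEn0 unfolding hEn_def cP by auto
  show ?thesis unfolding H_def using x_hA x_hS x_hU x_hNL x_hNR x_hFR x_hFL x_hM x_hMF x_hfl x_hfr x_hW0 x_hWn x_hC1 x_hCk x_hCI x_hE0 x_hEn by blast
qed


lemma send_right_simps:
  "mv (send_right st) = (if fmR st then map_option Suc (mid st) else None)"
  "lv (send_right st) = (if fl st then map_option Suc (nl st) else None)"
  "send_right st = None \<longleftrightarrow> \<not> fmR st \<and> \<not> fl st"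
  by (auto simp: send_right_def mv_def lv_def split: option.split)

lemma send_left_simps:
  "mv (send_left st) = (if fmL st then map_option Suc (mid st) else None)"
  "lv (send_left st) = (if fr st then map_option Suc (nr st) else None)"
  "send_left st = None \<longleftrightarrow> \<not> fmL st \<and> \<not> fr st"
  by (auto simp: send_left_def mv_def lv_def split: option.split)

lemma msgL_none: "msgL n s r 0 None" by (simp add: msgL_def mv_def lv_def)
lemma msgR_none: "s < n \<Longrightarrow> i + 1 = n \<Longrightarrow> msgR n s r i None" by (auto simp: msgR_def mv_def lv_def)

lemma msgL_ok:
  assumes i: "0 < i" "i < n" and G: "G n k s r (i-1) st"
  shows "msgL n s r i (send_right st)"
proof -
  have fr: "hFR n k s r (i-1) st" "hMF n k s r (i-1) st" "hfl n k s r (i-1) st"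
    using G unfolding G_def H_def by auto
  have a1: "fmR st \<longleftrightarrow> r = dst (i-1) s \<and> s \<le> i-1 \<and> i < n" using fr(1) i unfolding hFR_def by simp
  have a2: "fmR st \<Longrightarrow> mid st = Some (dst (i-1) s)" using fr(2) unfolding hMF_def by simp
  have a3: "fl st \<Longrightarrow> nl st = Some (i-1) \<and> r = Lt s (i-1)" using fr(3) unfolding hfl_def by simp
  have dd: "s \<le> i - 1 \<Longrightarrow> dst i s = Suc (dst (i-1) s)" using i unfolding dst_def by auto
  have dl: "dst i s \<le> Suc (Lt s (i-1))" using i unfolding dst_def Lt_def by auto
  have ll: "Lt s i = Suc (Lt s (i-1))" using i unfolding Lt_def by auto
  have c1: "\<not> (\<not> fmR st \<and> \<not> fl st) \<longrightarrow> dst i s \<le> Suc r" using a1 a3 dd dl by auto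
  have c2: "\<forall>x. (if fmR st then map_option Suc (mid st) else None) = Some x \<longrightarrow> x = dst i s \<and> s < i \<and> Suc r = dst i s"
    using a1 a2 dd i by (auto split: if_split_asm)
  have c3: "\<forall>v. (if fl st then map_option Suc (nl st) else None) = Some v \<longrightarrow> v = i \<and> Suc r = Lt s i"
    using a3 ll i by (auto split: if_split_asm)
  have c4: "s < i \<and> Suc r = dst i s \<longrightarrow> (if fmR st then map_option Suc (mid st) else None) = Some (dst i s)"
  proof
    assume h: "s < i \<and> Suc r = dst i s"
    hence h2: "s \<le> i - 1" by auto
    with h have "fmR st" "r = dst (i-1) s" using a1 dd i by auto
    thus "(if fmR st then map_option Suc (mid st) else None) = Some (dst i s)" using a2 dd h2 by simp
  qed
  have c5: "i = 0 \<longrightarrow> \<not> fmR st \<and> \<not> fl st" using i by simp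
  show ?thesis unfolding msgL_def send_right_simps using c1 c2 c3 c4 c5 by blast
qed

lemma msgR_ok:
  assumes i: "i + 1 < n" and sn: "s < n" and G: "G n k s r (i+1) st"
  shows "msgR n s r i (send_left st)"
proof -
  have fr: "hFL n k s r (i+1) st" "hMF n k s r (i+1) st" "hfr n k s r (i+1) st"
    using G unfolding G_def H_def by auto
  have a1: "fmL st \<longleftrightarrow> r = dst (i+1) s \<and> i+1 \<le> s" using fr(1) i unfolding hFL_def by simp
  have a2: "fmL st \<Longrightarrow> mid st = Some (dst (i+1) s)" using fr(2) unfolding hMF_def by simp
  have a3: "fr st \<Longrightarrow> nr st = Some (n-1-(i+1)) \<and> r = Rt n s (i+1)" using fr(3) unfolding hfr_def by simp
  have dd: "i + 1 \<le> s \<Longrightarrow> dst i s = Suc (dst (i+1) s)" unfolding dst_def by auto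
  have dl: "dst i s \<le> Rt n s i" using dst_le_Rt[OF sn] i by simp
  have ll: "Rt n s i = Suc (Rt n s (i+1))" using i sn unfolding Rt_def by auto
  have nn: "Suc (n-1-(i+1)) = n - 1 - i" using i by auto
  have c1: "\<not> (\<not> fmL st \<and> \<not> fr st) \<longrightarrow> dst i s \<le> Suc r" using a1 a3 dd dl ll by auto
  have c2: "\<forall>x. (if fmL st then map_option Suc (mid st) else None) = Some x \<longrightarrow> x = dst i s \<and> i < s \<and> Suc r = dst i s"
    using a1 a2 dd i by (auto split: if_split_asm)
  have c3: "\<forall>v. (if fr st then map_option Suc (nr st) else None) = Some v \<longrightarrow> v = n - 1 - i \<and> Suc r = Rt n s i"
    using a3 ll nn by (auto split: if_split_asm)
  have c4: "i < s \<and> Suc r = dst i s \<longrightarrow> (if fmL st then map_option Suc (mid st) else None) = Some (dst i s)"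
  proof
    assume h: "i < s \<and> Suc r = dst i s"
    hence h2: "i + 1 \<le> s" by auto
    with h have "fmL st" "r = dst (i+1) s" using a1 dd by auto
    thus "(if fmL st then map_option Suc (mid st) else None) = Some (dst i s)" using a2 dd h2 by simp
  qed
  have c5: "i + 1 = n \<longrightarrow> \<not> fmL st \<and> \<not> fr st" using i by simp
  show ?thesis unfolding msgR_def send_left_simps using c1 c2 c3 c4 c5 by blast
qed


lemma G_sleep0:
  assumes "i \<noteq> s"
  shows "G n k s 0 i sleeping"
proof -
  have d: "dst i s \<noteq> 0" using assms by (auto simp: dst_def)
  have x_hA: "hA n k s 0 i sleeping" unfolding hA_def sleeping_def using d by simp
  have x_hS: "hS n k s 0 i sleeping" unfolding hS_def sleeping_def using d by simp
  have x_hU: "hU n k s 0 i sleeping" unfolding hU_def sleeping_def using d by simp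
  have x_hNL: "hNL n k s 0 i sleeping" unfolding hNL_def sleeping_def using d by simp
  have x_hNR: "hNR n k s 0 i sleeping" unfolding hNR_def sleeping_def using d by simp
  have x_hFR: "hFR n k s 0 i sleeping" unfolding hFR_def sleeping_def using d by simp
  have x_hFL: "hFL n k s 0 i sleeping" unfolding hFL_def sleeping_def using d by simp
  have x_hM: "hM n k s 0 i sleeping" unfolding hM_def sleeping_def using d by simp
  have x_hMF: "hMF n k s 0 i sleeping" unfolding hMF_def sleeping_def using d by simp
  have x_hfl: "hfl n k s 0 i sleeping" unfolding hfl_def sleeping_def using d by simp
  have x_hfr: "hfr n k s 0 i sleeping" unfolding hfr_def sleeping_def using d by simp
  have x_hW0: "hW0 n k s 0 i sleeping" unfolding hW0_def sleeping_def using d by simp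
  have x_hWn: "hWn n k s 0 i sleeping" unfolding hWn_def sleeping_def using d by simp
  have x_hC1: "hC1 n k s 0 i sleeping" unfolding hC1_def sleeping_def using d by simp
  have x_hCk: "hCk n k s 0 i sleeping" unfolding hCk_def sleeping_def using d by simp
  have x_hCI: "hCI n k s 0 i sleeping" unfolding hCI_def sleeping_def using d by simp
  have x_hE0: "hE0 n k s 0 i sleeping" unfolding hE0_def sleeping_def using d by simp
  have x_hEn: "hEn n k s 0 i sleeping" unfolding hEn_def sleeping_def using d by simp
  have x_gD: "gD n k s 0 i sleeping" unfolding gD_def sleeping_def by simp
  have x_gB: "gB n k s 0 i sleeping" unfolding gB_def sleeping_def by simp
  have x_gE: "gE n k s 0 i sleeping" unfolding gE_def sleeping_def by simp
  have x_gT: "gT n k s 0 i sleeping" unfolding gT_def sleeping_def by simp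
  show ?thesis unfolding G_def H_def using x_hA x_hS x_hU x_hNL x_hNR x_hFR x_hFL x_hM x_hMF x_hfl x_hfr x_hW0 x_hWn x_hC1 x_hCk x_hCI x_hE0 x_hEn x_gD x_gB x_gE x_gT by blast
qed

lemma G_init:
  assumes sn: "s < n"
  shows "G n k s 0 s (init_start k (s=0) (s+1=n))"
proof -
  let ?X = "\<lparr>awake = True, mid = Some 0, tm = Some 0,
      nl = (if s=0 then Some 0 else None), nr = (if s+1=n then Some 0 else None), col = None,
      fromL = False, fmL = (\<not> s=0), fmR = (\<not> s+1=n),
      fl = (s=0 \<and> \<not> s+1=n), fr = (s+1=n \<and> \<not> s=0)\<rparr>"
  have d: "dst s s = 0" "Lt s s = s + s" "Rt n s s = (n-1-s) + (n-1-s)" by (simp_all add: dst_def Lt_def Rt_def)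
  have x_hA: "hA n k s 0 s ?X" unfolding hA_def using d sn by auto
  have x_hS: "hS n k s 0 s ?X" unfolding hS_def using d sn by auto
  have x_hU: "hU n k s 0 s ?X" unfolding hU_def using d sn by auto
  have x_hNL: "hNL n k s 0 s ?X" unfolding hNL_def using d sn by auto
  have x_hNR: "hNR n k s 0 s ?X" unfolding hNR_def using d sn by auto
  have x_hFR: "hFR n k s 0 s ?X" unfolding hFR_def using d sn by auto
  have x_hFL: "hFL n k s 0 s ?X" unfolding hFL_def using d sn by auto
  have x_hM: "hM n k s 0 s ?X" unfolding hM_def using d sn by auto
  have x_hMF: "hMF n k s 0 s ?X" unfolding hMF_def using d sn by auto
  have x_hfl: "hfl n k s 0 s ?X" unfolding hfl_def using d sn by auto
  have x_hfr: "hfr n k s 0 s ?X" unfolding hfr_def using d sn by auto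
  have x_hW0: "hW0 n k s 0 s ?X" unfolding hW0_def using d sn by auto
  have x_hWn: "hWn n k s 0 s ?X" unfolding hWn_def using d sn by auto
  have x_hC1: "hC1 n k s 0 s ?X" unfolding hC1_def using d sn by auto
  have x_hCk: "hCk n k s 0 s ?X" unfolding hCk_def using d sn by auto
  have x_hCI: "hCI n k s 0 s ?X" unfolding hCI_def using d sn by auto
  have x_hE0: "hE0 n k s 0 s ?X" unfolding hE0_def using d sn by auto
  have x_hEn: "hEn n k s 0 s ?X" unfolding hEn_def using d sn by auto
  have "H n k s 0 s ?X" unfolding H_def using x_hA x_hS x_hU x_hNL x_hNR x_hFR x_hFL x_hM x_hMF x_hfl x_hfr x_hW0 x_hWn x_hC1 x_hCk x_hCI x_hE0 x_hEn by blast
  from G_final[OF this] show ?thesis unfolding init_start_def by simp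
qed

lemma G_all:
  assumes sn: "s < n"
  shows "i < n \<Longrightarrow> G n k s r i (exec n k s r i)"
proof (induction r arbitrary: i)
  case 0
  thus ?case using G_init[OF sn] G_sleep0 by (cases "i = s") auto
next
  case (Suc r)
  let ?inL = "if 0 < i then send_right (exec n k s r (i - 1)) else None"
  let ?inR = "if i + 1 < n then send_left (exec n k s r (i + 1)) else None"
  have mL: "msgL n s r i ?inL"
  proof (cases "0 < i")
    case True thus ?thesis using msgL_ok[OF True Suc.prems Suc.IH] Suc.prems by simp
  next
    case False thus ?thesis using msgL_none by simp
  qed
  have mR: "msgR n s r i ?inR"
  proof (cases "i + 1 < n")
    case True thus ?thesis using msgR_ok[OF True sn Suc.IH] by simp
  next
    case False thus ?thesis using msgR_none[OF sn] Suc.prems by simp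
  qed
  have "H n k s (Suc r) i (pre (i=0) (i+1=n) (exec n k s r i) ?inL ?inR)"
    by (rule H_pre[OF Suc.IH[OF Suc.prems] Suc.prems sn mL mR])
  from G_final[OF this] show ?case by (simp add: step_pre)
qed

lemma step_col: "col (step k a b st inL inR) = col (decide k a b (pre a b st inL inR))"
  by (simp add: step_pre gc_fields)

lemma pre_col: "col (pre a b st inL inR) = col st" by (simp add: pre_fields)

lemma step_col_some: "col st \<noteq> None \<Longrightarrow> col (step k a b st inL inR) = col st"
  unfolding step_col using decide_some[of "pre a b st inL inR"] pre_col by simp

lemma step_none_eq: "col (step k a b st inL inR) = None \<Longrightarrow> step k a b st inL inR = pre a b st inL inR"
proof -
  assume h: "col (step k a b st inL inR) = None"
  hence "col (decide k a b (pre a b st inL inR)) = None" unfolding step_col .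
  hence "decide k a b (pre a b st inL inR) = pre a b st inL inR" by (rule decide_none)
  moreover have "col (pre a b st inL inR) = None"
  proof (rule ccontr)
    assume "col (pre a b st inL inR) \<noteq> None"
    hence "decide k a b (pre a b st inL inR) = pre a b st inL inR" by (rule decide_some)
    thus False using h \<open>col (pre a b st inL inR) \<noteq> None\<close> unfolding step_col by simp
  qed
  ultimately show ?thesis unfolding step_pre by (simp add: gc_none)
qed

lemma step_fields:
  "fr (step k a b st iL iR) = fr (pre a b st iL iR)"
  "fl (step k a b st iL iR) = fl (pre a b st iL iR)"
  "nr (step k a b st iL iR) = (if col (decide k a b (pre a b st iL iR)) = None \<or> fr (pre a b st iL iR) then nr (pre a b st iL iR) else None)"
  "nl (step k a b st iL iR) = (if col (decide k a b (pre a b st iL iR)) = None \<or> fl (pre a b st iL iR) then nl (pre a b st iL iR) else None)"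
  by (simp_all add: step_pre gc_fields decide_fields)

locale X =
  fixes n k s :: nat
  assumes k1: "1 \<le> k" and sn: "s < n"
begin

abbreviation E where "E r i \<equiv> exec n k s r i"
definition inL where "inL r i = (if 0 < i then send_right (E r (i - 1)) else None)"
definition inR where "inR r i = (if i + 1 < n then send_left (E r (i + 1)) else None)"

lemma E_Suc: "E (Suc r) i = step k (i=0) (i+1=n) (E r i) (inL r i) (inR r i)"
  by (simp add: inL_def inR_def)

lemma GE: "i < n \<Longrightarrow> G n k s r i (E r i)" using G_all[OF sn] .

lemma GEh:
  assumes "i < n"
  shows "hA n k s r i (E r i)" "hS n k s r i (E r i)" "hU n k s r i (E r i)" "hNL n k s r i (E r i)"
   "hNR n k s r i (E r i)" "hFR n k s r i (E r i)" "hFL n k s r i (E r i)" "hM n k s r i (E r i)"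
   "hMF n k s r i (E r i)" "hfl n k s r i (E r i)" "hfr n k s r i (E r i)" "hW0 n k s r i (E r i)"
   "hWn n k s r i (E r i)" "hC1 n k s r i (E r i)" "hCk n k s r i (E r i)" "hCI n k s r i (E r i)"
   "hE0 n k s r i (E r i)" "hEn n k s r i (E r i)"
   "gD n k s r i (E r i)" "gB n k s r i (E r i)" "gE n k s r i (E r i)" "gT n k s r i (E r i)"
  using GE[OF assms] unfolding G_def H_def by auto

lemma col_persist1: "col (E r i) \<noteq> None \<Longrightarrow> col (E (Suc r) i) = col (E r i)"
  unfolding E_Suc by (rule step_col_some)

lemma col_persist:
  assumes c: "col (E r i) \<noteq> None" and le: "r \<le> r'"
  shows "col (E r' i) = col (E r i)"
  using le
proof (induction r' rule: dec_induct)
  case base thus ?case by simp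
next
  case (step m)
  hence "col (E m i) \<noteq> None" using c by simp
  thus ?case using col_persist1[of m i] step.IH by simp
qed

lemma col_none_before: "col (E r' i) = None \<Longrightarrow> r \<le> r' \<Longrightarrow> col (E r i) = None"
proof (rule ccontr)
  assume a: "col (E r' i) = None" "r \<le> r'" "col (E r i) \<noteq> None"
  have "col (E r' i) = col (E r i)" by (rule col_persist[OF a(3) a(2)])
  thus False using a by simp
qed

lemma nl_persist1:
  assumes i: "i < n" and c: "col (E (Suc r) i) = None" and a: "nl (E r i) = Some a"
  shows "nl (E (Suc r) i) = Some a"
proof -
  have eq: "E (Suc r) i = pre (i=0) (i+1=n) (E r i) (inL r i) (inR r i)"
    using c unfolding E_Suc by (rule step_none_eq)
  have aw: "awake (E r i)" using GEh(2)[OF i, of r] a unfolding hS_def by auto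
  show ?thesis unfolding eq pre_fields using aw a by simp
qed

lemma nr_persist1:
  assumes i: "i < n" and c: "col (E (Suc r) i) = None" and a: "nr (E r i) = Some a"
  shows "nr (E (Suc r) i) = Some a"
proof -
  have eq: "E (Suc r) i = pre (i=0) (i+1=n) (E r i) (inL r i) (inR r i)"
    using c unfolding E_Suc by (rule step_none_eq)
  have aw: "awake (E r i)" using GEh(2)[OF i, of r] a unfolding hS_def by auto
  show ?thesis unfolding eq pre_fields using aw a by simp
qed

lemma nl_persist:
  assumes i: "i < n" and "r \<le> r'" and c: "col (E r' i) = None" and a: "nl (E r i) = Some a"
  shows "nl (E r' i) = Some a"
  using assms(2) c
proof (induction r' rule: dec_induct)
  case base thus ?case using a by simp
next
  case (step m)
  have "col (E m i) = None" using col_none_before[OF step.prems] by simp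
  hence "nl (E m i) = Some a" using step.IH by simp
  thus ?case using nl_persist1[OF i step.prems] by simp
qed

lemma nr_persist:
  assumes i: "i < n" and "r \<le> r'" and c: "col (E r' i) = None" and a: "nr (E r i) = Some a"
  shows "nr (E r' i) = Some a"
  using assms(2) c
proof (induction r' rule: dec_induct)
  case base thus ?case using a by simp
next
  case (step m)
  have "col (E m i) = None" using col_none_before[OF step.prems] by simp
  hence "nr (E m i) = Some a" using step.IH by simp
  thus ?case using nr_persist1[OF i step.prems] by simp
qed

lemma recvR:
  assumes j: "0 < j" "j + 1 < n" and c: "col (E t j) = None" and f: "fr (E t (j+1))"
  shows "fr (E (Suc t) j) \<and> nr (E (Suc t) j) = Some (n-1-j)"
proof -
  have h1: "nr (E t (j+1)) = Some (n-1-(j+1))" "t = Rt n s (j+1)"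
    using GEh(11)[OF j(2), of t] f unfolding hfr_def by auto
  have rt: "Rt n s j = Suc t" using h1(2) j sn unfolding Rt_def by auto
  have nN: "nr (E t j) = None" using GEh(5)[of j t] j rt unfolding hNR_def by auto
  have lv: "lv (inR t j) = Some (n-1-j)" unfolding inR_def using j f h1(1) by (simp add: send_left_simps)
  have fp: "fr (pre (j=0) (j+1=n) (E t j) (inL t j) (inR t j))" unfolding pre_fields using c nN lv j by simp
  have np: "nr (pre (j=0) (j+1=n) (E t j) (inL t j) (inR t j)) = Some (n-1-j)" unfolding pre_fields using c nN lv j by simp
  show ?thesis unfolding E_Suc step_fields using fp np by simp
qed

lemma recvL:
  assumes j: "0 < j" "j + 1 < n" and c: "col (E t j) = None" and f: "fl (E t (j-1))"
  shows "fl (E (Suc t) j) \<and> nl (E (Suc t) j) = Some j"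
proof -
  have h1: "nl (E t (j-1)) = Some (j-1)" "t = Lt s (j-1)"
  proof -
    have jj: "j - 1 < n" using j by simp
    show "nl (E t (j-1)) = Some (j-1)" "t = Lt s (j-1)" using GEh(10)[OF jj, of t] f unfolding hfl_def by auto
  qed
  have lt: "Lt s j = Suc t" using h1(2) j unfolding Lt_def by auto
  have nN: "nl (E t j) = None" using GEh(4)[of j t] j lt unfolding hNL_def by auto
  have lv: "lv (inL t j) = Some j" unfolding inL_def using j f h1(1) by (simp add: send_right_simps)
  have fp: "fl (pre (j=0) (j+1=n) (E t j) (inL t j) (inR t j))" unfolding pre_fields using c nN lv j by simp
  have np: "nl (pre (j=0) (j+1=n) (E t j) (inL t j) (inR t j)) = Some j" unfolding pre_fields using c nN lv j by simp
  show ?thesis unfolding E_Suc step_fields using fp np by simp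
qed


lemma RW:
  assumes "0 < j" "j < n"
  shows "fr (E (Rt n s j) j) \<or> (\<exists>j'. j \<le> j' \<and> j' + 1 < n \<and> col (E (Rt n s j' - 1) j') \<noteq> None)"
  using assms
proof (induction "n - 1 - j" arbitrary: j)
  case 0
  hence jn: "j + 1 = n" by simp
  have "Rt n s j = dst j s" using dst_simps(4,5)[OF sn jn] by simp
  thus ?case using GEh(13)[OF 0(3), of "Rt n s j"] jn 0(2) unfolding hWn_def by simp
next
  case (Suc m)
  hence j1: "j + 1 < n" and mm: "m = n - 1 - (j + 1)" by auto
  have IH: "fr (E (Rt n s (j+1)) (j+1)) \<or> (\<exists>j'. j + 1 \<le> j' \<and> j' + 1 < n \<and> col (E (Rt n s j' - 1) j') \<noteq> None)"
    using Suc.hyps(1)[OF mm] j1 by simp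
  have rt: "Rt n s j = Suc (Rt n s (j+1))" using j1 sn unfolding Rt_def by auto
  show ?case
  proof (cases "fr (E (Rt n s (j+1)) (j+1))")
    case True
    show ?thesis
    proof (cases "col (E (Rt n s (j+1)) j) = None")
      case c: True
      have "fr (E (Suc (Rt n s (j+1))) j)" using recvR[OF Suc.prems(1) j1 c] True by simp
      thus ?thesis using rt by simp
    next
      case False
      hence "col (E (Rt n s j - 1) j) \<noteq> None" using rt by simp
      thus ?thesis using j1 by blast
    qed
  next
    case False
    then obtain j' where "j + 1 \<le> j'" "j' + 1 < n" "col (E (Rt n s j' - 1) j') \<noteq> None" using IH by blast
    thus ?thesis by (intro disjI2 exI[of _ j']) simp
  qed
qed

lemma LW:
  assumes "j + 1 < n"
  shows "fl (E (Lt s j) j) \<or> (\<exists>j'. 0 < j' \<and> j' \<le> j \<and> col (E (Lt s j' - 1) j') \<noteq> None)"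
  using assms
proof (induction j)
  case 0
  have "Lt s 0 = dst 0 s" using dst_simps(2,3) by simp
  thus ?case using GEh(12)[of 0 "Lt s 0"] 0 unfolding hW0_def by simp
next
  case (Suc j)
  hence j1: "j + 1 < n" by simp
  have IH: "fl (E (Lt s j) j) \<or> (\<exists>j'. 0 < j' \<and> j' \<le> j \<and> col (E (Lt s j' - 1) j') \<noteq> None)"
    using Suc.IH[OF j1] .
  have lt: "Lt s (Suc j) = Suc (Lt s j)" unfolding Lt_def by simp
  show ?case
  proof (cases "fl (E (Lt s j) j)")
    case True
    show ?thesis
    proof (cases "col (E (Lt s j) (Suc j)) = None")
      case c: True
      have "fl (E (Suc (Lt s j)) (Suc j))" using recvL[of "Suc j", OF _ Suc.prems c] True by simp
      thus ?thesis using lt by simp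
    next
      case False
      hence "col (E (Lt s (Suc j) - 1) (Suc j)) \<noteq> None" using lt by simp
      thus ?thesis by blast
    qed
  next
    case False
    then obtain j' where "0 < j'" "j' \<le> j" "col (E (Lt s j' - 1) j') \<noteq> None" using IH by blast
    thus ?thesis by (intro disjI2 exI[of _ j']) simp
  qed
qed

end

definition Ps :: "nat \<Rightarrow> nat \<Rightarrow> nat \<Rightarrow> nat" where
  "Ps n k c = (\<Sum>c'=1..c. ribbon_size n k c')"

lemma Ps_0: "Ps n k 0 = 0" by (simp add: Ps_def)
lemma Ps_Suc: "Ps n k (Suc c) = Ps n k c + ribbon_size n k (Suc c)" by (simp add: Ps_def)

lemma Ps_mono: "c \<le> c' \<Longrightarrow> Ps n k c \<le> Ps n k c'"
  unfolding Ps_def by (rule sum_mono2) auto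

lemma size_ge: "n div k \<le> ribbon_size n k c" by (simp add: ribbon_size_def)
lemma size_le: "ribbon_size n k c \<le> n div k + 1" by (simp add: ribbon_size_def)

lemma card_ind:
  assumes "A + B \<le> k"
  shows "card {c \<in> {1..k}. c \<le> A \<or> k - B < c} = A + B"
proof -
  have "{c \<in> {1..k}. c \<le> A \<or> k - B < c} = {1..A} \<union> {k - B + 1..k}" using assms by auto
  moreover have "{1..A} \<inter> {k - B + 1..k} = {}" using assms by auto
  ultimately have "card {c \<in> {1..k}. c \<le> A \<or> k - B < c} = card {1..A} + card {k - B + 1..k}"
    by (simp add: card_Un_disjoint)
  thus ?thesis using assms by simp
qed

lemma Ps_k:
  assumes k: "1 \<le> k"
  shows "Ps n k k = n"
proof -
  let ?A = "(n mod k + 1) div 2" and ?B = "n mod k div 2"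
  have m: "n mod k < k" using k by simp
  have AB: "?A + ?B = n mod k" by simp
  have "Ps n k k = (\<Sum>c=1..k. n div k + (if c \<le> ?A \<or> k - ?B < c then 1 else 0))"
    unfolding Ps_def ribbon_size_def by simp
  also have "\<dots> = k * (n div k) + (\<Sum>c=1..k. (if c \<le> ?A \<or> k - ?B < c then 1 else 0))"
    by (simp add: sum.distrib)
  also have "(\<Sum>c=1..k. (if c \<le> ?A \<or> k - ?B < c then 1 else 0::nat)) = card {c \<in> {1..k}. c \<le> ?A \<or> k - ?B < c}"
  proof -
    have "{1..k} \<inter> {c. c \<le> ?A \<or> k - ?B < c} = {c \<in> {1..k}. c \<le> ?A \<or> k - ?B < c}" by auto
    thus ?thesis using sum.If_cases[of "{1..k}" "\<lambda>c. c \<le> ?A \<or> k - ?B < c" "\<lambda>_. 1::nat" "\<lambda>_. 0"] by simp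
  qed
  also have "\<dots> = n mod k" using card_ind[of ?A ?B k] AB m by simp
  finally show ?thesis by simp
qed

lemma size1: "1 \<le> k \<Longrightarrow> ribbon_size n k 1 = n div k + (if 1 \<le> n mod k then 1 else 0)"
  unfolding ribbon_size_def by auto

lemma sizek: "2 \<le> k \<Longrightarrow> ribbon_size n k k = n div k + (if 2 \<le> n mod k then 1 else 0)"
proof -
  assume k: "2 \<le> k"
  have m: "n mod k < k" using k by simp
  have "\<not> k \<le> (n mod k + 1) div 2" using m k by linarith
  moreover have "(k - n mod k div 2 < k) = (2 \<le> n mod k)" using m k by auto
  ultimately show ?thesis unfolding ribbon_size_def by simp
qed

lemma size_k1: "ribbon_size n 1 1 = n" unfolding ribbon_size_def by simp

lemma rc_eq:
  assumes "Ps n k (a - 1) \<le> i" "i < Ps n k a" "1 \<le> a"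
  shows "ribbon_color n k i = a"
  unfolding ribbon_color_def Ps_def[symmetric]
proof (rule Least_equality)
  show "i < Ps n k a" by fact
next
  fix y assume y: "i < Ps n k y"
  show "a \<le> y"
  proof (rule ccontr)
    assume "\<not> a \<le> y" hence "y \<le> a - 1" by simp
    hence "Ps n k y \<le> Ps n k (a - 1)" by (rule Ps_mono)
    thus False using y assms by simp
  qed
qed

lemma rc_props:
  assumes k: "1 \<le> k" and i: "i < n"
  shows "1 \<le> ribbon_color n k i \<and> ribbon_color n k i \<le> k \<and>
    Ps n k (ribbon_color n k i - 1) \<le> i \<and> i < Ps n k (ribbon_color n k i)"
proof -
  let ?P = "\<lambda>c. i < Ps n k c"
  have ex: "?P k" using Ps_k[OF k] i by simp
  have rc: "ribbon_color n k i = (LEAST c. ?P c)" unfolding ribbon_color_def Ps_def by simp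
  have a1: "?P (LEAST c. ?P c)" using ex by (rule LeastI)
  have a2: "(LEAST c. ?P c) \<le> k" using ex by (rule Least_le)
  have a3: "(LEAST c. ?P c) \<noteq> 0" using a1 Ps_0 by (metis not_less_zero)
  have a4: "\<not> ?P ((LEAST c. ?P c) - 1)" by (rule not_less_Least) (use a3 in simp)
  show ?thesis unfolding rc using a1 a2 a3 a4 by simp
qed

lemma rc_mono:
  assumes k: "1 \<le> k" and "i \<le> j" "j < n"
  shows "ribbon_color n k i \<le> ribbon_color n k j"
proof -
  have "i < Ps n k (ribbon_color n k j)" using rc_props[OF k assms(3)] assms(2) by simp
  thus ?thesis unfolding ribbon_color_def Ps_def[symmetric] by (rule Least_le)
qed

lemma Ps_1: "Ps n k 1 = ribbon_size n k 1" by (simp add: Ps_def)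

lemma rc_1_iff:
  assumes k: "1 \<le> k" and i: "i < n"
  shows "ribbon_color n k i = 1 \<longleftrightarrow> i < ribbon_size n k 1"
proof
  assume "ribbon_color n k i = 1" thus "i < ribbon_size n k 1" using rc_props[OF k i] Ps_1 by simp
next
  assume "i < ribbon_size n k 1" thus "ribbon_color n k i = 1" using rc_eq[of n k 1 i] Ps_0 Ps_1 by simp
qed

lemma Ps_km1: "1 \<le> k \<Longrightarrow> Ps n k (k - 1) = n - ribbon_size n k k"
proof -
  assume k: "1 \<le> k"
  have "Ps n k k = Ps n k (k - 1) + ribbon_size n k k" using Ps_Suc[of n k "k-1"] k by simp
  thus ?thesis using Ps_k[OF k] by simp
qed

lemma rc_k_iff:
  assumes k: "1 \<le> k" and i: "i < n"
  shows "ribbon_color n k i = k \<longleftrightarrow> n - ribbon_size n k k \<le> i"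
proof
  assume "ribbon_color n k i = k" thus "n - ribbon_size n k k \<le> i" using rc_props[OF k i] Ps_km1[OF k] by simp
next
  assume "n - ribbon_size n k k \<le> i" thus "ribbon_color n k i = k"
    using rc_eq[of n k k i] Ps_km1[OF k] Ps_k[OF k] i k by simp
qed

lemma rc_class:
  assumes k: "1 \<le> k" and a: "1 \<le> a" "a \<le> k"
  shows "{i. i < n \<and> ribbon_color n k i = a} = {Ps n k (a - 1)..<Ps n k a}"
proof -
  have "Ps n k a \<le> Ps n k k" using a(2) by (rule Ps_mono)
  hence pa: "Ps n k a \<le> n" using Ps_k[OF k] by simp
  show ?thesis
  proof (intro set_eqI iffI)
    fix i assume "i \<in> {i. i < n \<and> ribbon_color n k i = a}"
    thus "i \<in> {Ps n k (a - 1)..<Ps n k a}" using rc_props[OF k] by auto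
  next
    fix i assume "i \<in> {Ps n k (a - 1)..<Ps n k a}"
    thus "i \<in> {i. i < n \<and> ribbon_color n k i = a}" using rc_eq[of n k a i] a pa by auto
  qed
qed

lemma rc_card:
  assumes k: "1 \<le> k" and a: "1 \<le> a" "a \<le> k"
  shows "card {i. i < n \<and> ribbon_color n k i = a} = ribbon_size n k a"
proof -
  have "Ps n k a = Ps n k (a - 1) + ribbon_size n k a" using Ps_Suc[of n k "a-1"] a by simp
  thus ?thesis unfolding rc_class[OF assms] by simp
qed

lemma rc_ribbon:
  assumes k: "1 \<le> k"
  shows "is_ribbon n k (ribbon_color n k)"
  unfolding is_ribbon_def
proof (intro conjI allI impI)
  fix i assume "i < n" thus "1 \<le> ribbon_color n k i" using rc_props[OF k] by simp
next
  fix i assume "i < n" thus "ribbon_color n k i \<le> k" using rc_props[OF k] by simp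
next
  fix i j m assume h: "i \<le> m \<and> m \<le> j \<and> j < n \<and> ribbon_color n k i = ribbon_color n k j"
  have "ribbon_color n k i \<le> ribbon_color n k m" using h by (intro rc_mono[OF k]) auto
  moreover have "ribbon_color n k m \<le> ribbon_color n k j" using h by (intro rc_mono[OF k]) auto
  ultimately show "ribbon_color n k m = ribbon_color n k i" using h by simp
next
  fix i j assume "i \<le> j \<and> j < n" thus "ribbon_color n k i \<le> ribbon_color n k j" using rc_mono[OF k] by simp
next
  fix a b assume h: "1 \<le> a \<and> a \<le> k \<and> 1 \<le> b \<and> b \<le> k"
  show "card {i. i < n \<and> ribbon_color n k i = a} \<le> card {i. i < n \<and> ribbon_color n k i = b} + 1"
    using rc_card[OF k] h size_ge[of n k b] size_le[of n k a] by simp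
qed

lemma condL:
  assumes k: "1 \<le> k"
  shows "(if s < i then 2 * (k - 1) * i + dst i s \<le> t else 2 * (k - 1) * i \<le> t + dst i s)
         \<longleftrightarrow> 2 * k * i \<le> t + s + i"
proof -
  have e: "2 * k * i = 2 * (k - 1) * i + 2 * i" using k by (cases k) (auto simp: algebra_simps)
  show ?thesis unfolding dst_def e by auto
qed

lemma condR:
  assumes k: "1 \<le> k" and i: "i < n" and sn: "s < n"
  shows "(if s < i then 2 * (k - 1) * (n-1-i) \<le> t + dst i s else 2 * (k - 1) * (n-1-i) + dst i s \<le> t)
         \<longleftrightarrow> 2 * k * (n-1-i) \<le> t + (n - 1 - s) + (n - 1 - i)"
proof -
  have e: "2 * k * (n-1-i) = 2 * (k - 1) * (n-1-i) + 2 * (n-1-i)" using k by (cases k) (auto simp: algebra_simps)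
  show ?thesis unfolding dst_def e using i sn by auto
qed

lemma dec_none_L:
  assumes "col st = None" "nl st = Some x" "nr st = None" "mid st = Some m" "tm st = Some t"
    "col (decide k False False st) = None"
  shows "\<not> (if fromL st then 2 * (k - 1) * x + m \<le> t else 2 * (k - 1) * x \<le> t + m)"
  using assms by (simp add: decide_def split: if_split_asm)

lemma dec_none_R:
  assumes "col st = None" "nl st = None" "nr st = Some y" "mid st = Some m" "tm st = Some t"
    "col (decide k False False st) = None"
  shows "\<not> (if fromL st then 2 * (k - 1) * y \<le> t + m else 2 * (k - 1) * y + m \<le> t)"
  using assms by (simp add: decide_def split: if_split_asm)

context X begin

abbreviation rc where "rc i \<equiv> ribbon_color n k i"

lemma n1: "1 \<le> n" using sn by simp

lemma rc_0: "rc 0 = 1"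
proof -
  have "0 < ribbon_size n k 1"
  proof (cases "n div k = 0")
    case True
    hence "n < k" using k1 by (simp add: div_eq_0_iff)
    hence "n mod k = n" by simp
    thus ?thesis using size1[OF k1, of n] n1 by simp
  next
    case False thus ?thesis using size1[OF k1, of n] by simp
  qed
  moreover have "(0::nat) < n" using sn by simp
  ultimately show ?thesis using rc_1_iff[OF k1, of 0 n] by simp
qed

lemma rc_last: "2 \<le> n \<Longrightarrow> rc (n - 1) = k"
proof -
  assume n2: "2 \<le> n"
  have "1 \<le> ribbon_size n k k"
  proof (cases "k = 1")
    case True thus ?thesis using size_k1[of n] n1 by simp
  next
    case False
    hence k2: "2 \<le> k" using k1 by simp
    show ?thesis
    proof (cases "n div k = 0")
      case True
      hence "n < k" using k1 by (simp add: div_eq_0_iff)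
    hence "n mod k = n" by simp
      thus ?thesis using sizek[OF k2, of n] n2 by simp
    next
      case False thus ?thesis using sizek[OF k2, of n] by simp
    qed
  qed
  thus ?thesis using rc_k_iff[OF k1, of "n-1" n] n2 by simp
qed

lemma early1: "k * i < n \<Longrightarrow> i < n \<Longrightarrow> rc i = 1"
proof -
  assume a: "k * i < n" "i < n"
  have "i < ribbon_size n k 1"
  proof (rule ccontr)
    assume "\<not> i < ribbon_size n k 1"
    hence "k * ribbon_size n k 1 \<le> k * i" by (intro mult_le_mono2) simp
    moreover have "n \<le> k * ribbon_size n k 1"
    proof -
      obtain q m where qm: "q = n div k" "m = n mod k" by simp
      have nq: "n = k * q + m" using qm by simp
      have mk: "m < k" using k1 qm by simp
      have e: "k * (q + 1) = k * q + k" by (simp add: algebra_simps)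
      show ?thesis unfolding size1[OF k1] qm[symmetric] using nq mk e by (cases "1 \<le> m") simp_all
    qed
    ultimately show False using a by linarith
  qed
  thus ?thesis using rc_1_iff[OF k1 a(2)] by simp
qed

lemma earlyk: "k * (n - 1 - i) + 2 \<le> n \<Longrightarrow> i < n \<Longrightarrow> rc i = k"
proof -
  assume a: "k * (n - 1 - i) + 2 \<le> n" "i < n"
  have "n - 1 - i < ribbon_size n k k"
  proof (cases "k = 1")
    case True thus ?thesis using size_k1[of n] a by simp
  next
    case False
    hence k2: "2 \<le> k" using k1 by simp
    show ?thesis
    proof (rule ccontr)
      assume "\<not> n - 1 - i < ribbon_size n k k"
      hence le: "k * ribbon_size n k k \<le> k * (n - 1 - i)" by (intro mult_le_mono2) simp
      obtain q m where qm: "q = n div k" "m = n mod k" by simp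
      have nq: "n = k * q + m" using qm by simp
      have mk: "m < k" using k1 qm by simp
      have e: "k * (q + 1) = k * q + k" by (simp add: algebra_simps)
      have "n - 1 \<le> k * ribbon_size n k k" unfolding sizek[OF k2] qm[symmetric] using nq mk e by (cases "2 \<le> m") simp_all
      thus False using le a by linarith
    qed
  qed
  thus ?thesis using rc_k_iff[OF k1 a(2)] by simp
qed


lemma H_pre_E:
  assumes i: "i < n"
  shows "H n k s (Suc r) i (pre (i=0) (i+1=n) (E r i) (inL r i) (inR r i))"
proof -
  have mL: "msgL n s r i (inL r i)"
  proof (cases "0 < i")
    case True thus ?thesis using msgL_ok[OF True i GE] i unfolding inL_def by simp
  next
    case False thus ?thesis using msgL_none unfolding inL_def by simp
  qed
  have mR: "msgR n s r i (inR r i)"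
  proof (cases "i + 1 < n")
    case True thus ?thesis using msgR_ok[OF True sn GE[OF True]] unfolding inR_def by simp
  next
    case False thus ?thesis using msgR_none[OF sn] i unfolding inR_def by simp
  qed
  show ?thesis by (rule H_pre[OF GE[OF i] i sn mL mR])
qed

lemma Rt_sum: "i < n \<Longrightarrow> Rt n s i + s + i = 2 * n - 2" using sn unfolding Rt_def by auto

lemma earlyL_ok:
  assumes i: "0 < i" "i + 1 < n"
    and IH0: "\<forall>r' j c. r' < Suc r0 \<longrightarrow> j < n \<longrightarrow> col (E r' j) = Some c \<longrightarrow> c = rc j"
    and c0: "col (E r0 i) = None"
    and nP: "nr (pre (i=0) (i+1=n) (E r0 i) (inL r0 i) (inR r0 i)) = None"
    and nS: "nr (E (Suc r0) i) \<noteq> None \<Longrightarrow> False"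
    and cond: "2 * k * i \<le> Suc r0 + s + i"
  shows "rc i = 1"
proof (cases "Suc r0 < Rt n s i")
  case True
  have "Rt n s i + s + i = 2 * n - 2" using Rt_sum i by simp
  hence "k * i < n" using True cond by linarith
  thus ?thesis using early1 i by simp
next
  case False
  have "fr (E (Rt n s i) i) \<or> (\<exists>j'. i \<le> j' \<and> j' + 1 < n \<and> col (E (Rt n s j' - 1) j') \<noteq> None)"
    using RW[of i] i by simp
  thus ?thesis
  proof
    assume f: "fr (E (Rt n s i) i)"
    have nrs: "nr (E (Rt n s i) i) = Some (n-1-i)" using GEh(11)[of i "Rt n s i"] i f unfolding hfr_def by simp
    show ?thesis
    proof (cases "Rt n s i \<le> r0")
      case True
      have "nr (E r0 i) = Some (n-1-i)" using nr_persist[of i, OF _ True c0 nrs] i by simp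
      hence "nr (pre (i=0) (i+1=n) (E r0 i) (inL r0 i) (inR r0 i)) \<noteq> None" using i unfolding pre_fields by simp
      thus ?thesis using nP by simp
    next
      case False2: False
      hence "Rt n s i = Suc r0" using False by simp
      thus ?thesis using nrs nS by simp
    qed
  next
    assume "\<exists>j'. i \<le> j' \<and> j' + 1 < n \<and> col (E (Rt n s j' - 1) j') \<noteq> None"
    then obtain j' where j': "i \<le> j'" "j' + 1 < n" "col (E (Rt n s j' - 1) j') \<noteq> None" by blast
    have rt1: "1 \<le> Rt n s j'" using j' unfolding Rt_def by simp
    have "j' \<noteq> i"
    proof
      assume "j' = i"
      hence "col (E (Rt n s i - 1) i) = None" using col_none_before[OF c0] False by simp
      thus False using j' \<open>j' = i\<close> by simp
    qed
    hence lt: "i < j'" using j' by simp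
    hence "Rt n s j' < Rt n s i" using j' sn unfolding Rt_def by simp
    then obtain c' where c': "col (E (Rt n s j' - 1) j') = Some c'" using j' by auto
    have "c' = rc j'" using IH0[rule_format, OF _ _ c'] \<open>Rt n s j' < Rt n s i\<close> False j' by simp
    moreover have "c' = 1" using GEh(14)[of j' "Rt n s j' - 1"] j' c' rt1 unfolding hC1_def by auto
    ultimately have "rc j' = 1" by simp
    moreover have "rc i \<le> rc j'" using rc_mono[OF k1, of i j' n] lt j' by simp
    moreover have "1 \<le> rc i" using rc_props[OF k1, of i n] i by simp
    ultimately show ?thesis by simp
  qed
qed

lemma earlyR_ok:
  assumes i: "0 < i" "i + 1 < n"
    and IH0: "\<forall>r' j c. r' < Suc r0 \<longrightarrow> j < n \<longrightarrow> col (E r' j) = Some c \<longrightarrow> c = rc j"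
    and c0: "col (E r0 i) = None"
    and nP: "nl (pre (i=0) (i+1=n) (E r0 i) (inL r0 i) (inR r0 i)) = None"
    and nS: "nl (E (Suc r0) i) \<noteq> None \<Longrightarrow> False"
    and cond: "2 * k * (n-1-i) \<le> Suc r0 + (n-1-s) + (n-1-i)"
  shows "rc i = k"
proof (cases "Suc r0 < Lt s i")
  case True
  have "Rt n s i + s + i = 2 * n - 2" using Rt_sum i by simp
  hence "k * (n-1-i) + 2 \<le> n" using True cond unfolding Lt_def Rt_def by linarith
  thus ?thesis using earlyk i by simp
next
  case False
  have "fl (E (Lt s i) i) \<or> (\<exists>j'. 0 < j' \<and> j' \<le> i \<and> col (E (Lt s j' - 1) j') \<noteq> None)"
    using LW[of i] i by simp
  thus ?thesis
  proof
    assume f: "fl (E (Lt s i) i)"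
    have nls: "nl (E (Lt s i) i) = Some i" using GEh(10)[of i "Lt s i"] i f unfolding hfl_def by simp
    show ?thesis
    proof (cases "Lt s i \<le> r0")
      case True
      have "nl (E r0 i) = Some i" using nl_persist[of i, OF _ True c0 nls] i by simp
      hence "nl (pre (i=0) (i+1=n) (E r0 i) (inL r0 i) (inR r0 i)) \<noteq> None" using i unfolding pre_fields by simp
      thus ?thesis using nP by simp
    next
      case False2: False
      hence "Lt s i = Suc r0" using False by simp
      thus ?thesis using nls nS by simp
    qed
  next
    assume "\<exists>j'. 0 < j' \<and> j' \<le> i \<and> col (E (Lt s j' - 1) j') \<noteq> None"
    then obtain j' where j': "0 < j'" "j' \<le> i" "col (E (Lt s j' - 1) j') \<noteq> None" by blast
    have lt1: "1 \<le> Lt s j'" using j' unfolding Lt_def by simp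
    have "j' \<noteq> i"
    proof
      assume "j' = i"
      hence "col (E (Lt s i - 1) i) = None" using col_none_before[OF c0] False by simp
      thus False using j' \<open>j' = i\<close> by simp
    qed
    hence lt: "j' < i" using j' by simp
    hence "Lt s j' < Lt s i" unfolding Lt_def by simp
    then obtain c' where c': "col (E (Lt s j' - 1) j') = Some c'" using j' by auto
    have jn: "j' < n" using lt i by simp
    have "c' = rc j'" using IH0[rule_format, OF _ jn c'] \<open>Lt s j' < Lt s i\<close> False by simp
    moreover have "c' = k" using GEh(15)[OF jn, of "Lt s j' - 1"] j' c' lt1 unfolding hCk_def by auto
    ultimately have "rc j' = k" by simp
    moreover have "rc j' \<le> rc i" using rc_mono[OF k1, of j' i n] lt i by simp
    moreover have "rc i \<le> k" using rc_props[OF k1, of i n] i by simp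
    ultimately show ?thesis by simp
  qed
qed


lemma correct:
  "i < n \<Longrightarrow> col (E r i) = Some c \<Longrightarrow> c = rc i"
proof (induction r arbitrary: i c rule: less_induct)
  case (less r)
  note IH = less.IH
  show ?case
  proof (cases "i = 0")
    case True
    thus ?thesis using GEh(17)[OF less.prems(1), of r] less.prems rc_0 unfolding hE0_def by simp
  next
    case i0: False
    show ?thesis
    proof (cases "i + 1 = n")
      case True
      hence "2 \<le> n" using i0 by simp
      moreover have "i = n - 1" using True by simp
      ultimately show ?thesis using GEh(18)[OF less.prems(1), of r] less.prems rc_last True i0 unfolding hEn_def by simp
    next
      case iN: False
      have ii: "0 < i" "i + 1 < n" using i0 iN less.prems by auto
      have "Lt s i \<le> r \<or> Rt n s i \<le> r" using GEh(16)[OF less.prems(1), of r] less.prems ii unfolding hCI_def by auto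
      moreover have "1 \<le> Lt s i" "1 \<le> Rt n s i" using ii unfolding Lt_def Rt_def by auto
      ultimately obtain r0 where r0: "r = Suc r0" by (metis Suc_pred' le_trans less_eq_Suc_le not_less_eq_eq zero_less_Suc less_imp_le_nat Suc_le_lessD neq0_conv not_one_le_zero) 
      show ?thesis
      proof (cases "col (E r0 i) = None")
        case False
        hence "col (E r i) = col (E r0 i)" using col_persist1[of r0 i] r0 by simp
        thus ?thesis using IH[of r0 i c] r0 less.prems by simp
      next
        case c0: True
        let ?P = "pre (i=0) (i+1=n) (E r0 i) (inL r0 i) (inR r0 i)"
        have HP: "H n k s (Suc r0) i ?P" by (rule H_pre_E[OF less.prems(1)])
        have cP: "col ?P = None" using c0 by (simp add: pre_col)
        have "col (E (Suc r0) i) = Some c" using less.prems(2) r0 by (simp del: exec.simps)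
        hence cd: "col (decide k (i=0) (i+1=n) ?P) = Some c" unfolding E_Suc step_col .
        have IH': "\<forall>r' j c. r' < Suc r0 \<longrightarrow> j < n \<longrightarrow> col (E r' j) = Some c \<longrightarrow> c = rc j"
          using IH r0 by blast
        have hs: "hNL n k s (Suc r0) i ?P" "hNR n k s (Suc r0) i ?P" "hS n k s (Suc r0) i ?P" "hU n k s (Suc r0) i ?P"
          using HP unfolding H_def by blast+
        have Es: "E (Suc r0) i = step k (i=0) (i+1=n) (E r0 i) (inL r0 i) (inR r0 i)" unfolding E_Suc ..
        have dn: "(\<exists>x y. nl ?P = Some x \<and> nr ?P = Some y \<and> c = ribbon_color (x+y+1) k x) \<or>
          (\<exists>x m t. nl ?P = Some x \<and> nr ?P = None \<and> mid ?P = Some m \<and> tm ?P = Some t \<and> c = 1 \<and>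
              (if fromL ?P then 2 * (k - 1) * x + m \<le> t else 2 * (k - 1) * x \<le> t + m)) \<or>
          (\<exists>y m t. nl ?P = None \<and> nr ?P = Some y \<and> mid ?P = Some m \<and> tm ?P = Some t \<and> c = k \<and>
              (if fromL ?P then 2 * (k - 1) * y \<le> t + m else 2 * (k - 1) * y + m \<le> t))"
          using dec_new[OF cP cd] i0 iN by blast
        from dn show ?thesis
        proof (elim disjE exE conjE)
          fix x y assume a: "nl ?P = Some x" "nr ?P = Some y" "c = ribbon_color (x + y + 1) k x"
          have "x = i" "y = n - 1 - i" using hs(1,2) a unfolding hNL_def hNR_def by auto
          thus ?thesis using a ii by simp
        next
          fix x m t assume a: "nl ?P = Some x" "nr ?P = None" "mid ?P = Some m" "tm ?P = Some t" "c = 1"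
            "(if fromL ?P then 2 * (k - 1) * x + m \<le> t else 2 * (k - 1) * x \<le> t + m)"
          have aw: "awake ?P" using hs(3) a(1) unfolding hS_def by auto
          have xi: "x = i" using hs(1) a(1) unfolding hNL_def by auto
          have mt: "m = dst i s" "t = Suc r0" "fromL ?P = (s < i)" using hs(4) aw cP a(3,4) unfolding hU_def by auto
          have cond: "2 * k * i \<le> Suc r0 + s + i" using a(6) condL[OF k1, of s i t] unfolding xi mt by simp
          have "nr (E (Suc r0) i) = None" unfolding Es step_fields a(2) by simp
          hence nS: "nr (E (Suc r0) i) \<noteq> None \<Longrightarrow> False" by simp
          have "rc i = 1" by (rule earlyL_ok[OF ii IH' c0 _ nS cond]) (fact a(2))
          thus ?thesis using a(5) by simp
        next
          fix y m t assume a: "nl ?P = None" "nr ?P = Some y" "mid ?P = Some m" "tm ?P = Some t" "c = k"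
            "(if fromL ?P then 2 * (k - 1) * y \<le> t + m else 2 * (k - 1) * y + m \<le> t)"
          have aw: "awake ?P" using hs(3) a(2) unfolding hS_def by auto
          have yi: "y = n - 1 - i" using hs(2) a(2) unfolding hNR_def by auto
          have mt: "m = dst i s" "t = Suc r0" "fromL ?P = (s < i)" using hs(4) aw cP a(3,4) unfolding hU_def by auto
          have cond: "2 * k * (n-1-i) \<le> Suc r0 + (n-1-s) + (n-1-i)"
            using a(6) condR[OF k1 less.prems(1) sn, of t] unfolding yi mt by simp
          have "nl (E (Suc r0) i) = None" unfolding Es step_fields a(1) by simp
          hence nS: "nl (E (Suc r0) i) \<noteq> None \<Longrightarrow> False" by simp
          have "rc i = k" by (rule earlyR_ok[OF ii IH' c0 _ nS cond]) (fact a(1))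
          thus ?thesis using a(5) by simp
        qed
      qed
    qed
  qed
qed

end

context X begin

lemma undec_facts:
  assumes i: "0 < i" "i + 1 < n" and c: "col (E r i) = None" and aw: "awake (E r i)"
  shows "mid (E r i) = Some (dst i s)" "tm (E r i) = Some r" "fromL (E r i) = (s < i)"
    "col (decide k False False (E r i)) = None" "nl (E r i) = None \<or> nr (E r i) = None"
proof -
  have ii: "i < n" using i by simp
  show "mid (E r i) = Some (dst i s)" "tm (E r i) = Some r" "fromL (E r i) = (s < i)"
    using GEh(3)[OF ii, of r] c aw unfolding hU_def by auto
  have "decide k (i=0) (i+1=n) (E r i) = E r i" using GEh(19)[OF ii, of r] c aw unfolding gD_def by auto
  moreover have "(i = 0) = False" "(i + 1 = n) = False" using i by auto
  ultimately show "col (decide k False False (E r i)) = None" using c by simp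
  show "nl (E r i) = None \<or> nr (E r i) = None" using GEh(20)[OF ii, of r] c unfolding gB_def by auto
qed

lemma LiveL:
  assumes i: "0 < i" "i + 1 < n" and nl0: "nl (E (Lt s i) i) = Some i" and r: "Lt s i \<le> r"
    and cond: "2 * k * i \<le> r + s + i"
  shows "col (E r i) \<noteq> None"
proof
  assume c: "col (E r i) = None"
  have ii: "i < n" using i by simp
  have nl: "nl (E r i) = Some i" using nl_persist[OF ii r c nl0] .
  have aw: "awake (E r i)" using GEh(2)[OF ii, of r] nl unfolding hS_def by auto
  note u = undec_facts[OF i c aw]
  have nr: "nr (E r i) = None" using u(5) nl by simp
  have "\<not> (if fromL (E r i) then 2 * (k - 1) * i + dst i s \<le> r else 2 * (k - 1) * i \<le> r + dst i s)"
    using dec_none_L[OF c nl nr u(1) u(2) u(4)] .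
  thus False using condL[OF k1, of s i r] cond u(3) by simp
qed

lemma LiveR:
  assumes i: "0 < i" "i + 1 < n" and nr0: "nr (E (Rt n s i) i) = Some (n-1-i)" and r: "Rt n s i \<le> r"
    and cond: "2 * k * (n-1-i) \<le> r + (n-1-s) + (n-1-i)"
  shows "col (E r i) \<noteq> None"
proof
  assume c: "col (E r i) = None"
  have ii: "i < n" using i by simp
  have nr: "nr (E r i) = Some (n-1-i)" using nr_persist[OF ii r c nr0] .
  have aw: "awake (E r i)" using GEh(2)[OF ii, of r] nr unfolding hS_def by auto
  note u = undec_facts[OF i c aw]
  have nl: "nl (E r i) = None" using u(5) nr by simp
  have "\<not> (if fromL (E r i) then 2 * (k - 1) * (n-1-i) \<le> r + dst i s else 2 * (k - 1) * (n-1-i) + dst i s \<le> r)"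
    using dec_none_R[OF c nl nr u(1) u(2) u(4)] .
  thus False using condR[OF k1 ii sn, of r] cond u(3) by simp
qed

lemma LiveLR:
  assumes i: "0 < i" "i + 1 < n" and nl0: "nl (E (Lt s i) i) = Some i" and nr0: "nr (E (Rt n s i) i) = Some (n-1-i)"
    and r: "Lt s i \<le> r" "Rt n s i \<le> r"
  shows "col (E r i) \<noteq> None"
proof
  assume c: "col (E r i) = None"
  have ii: "i < n" using i by simp
  have nl: "nl (E r i) = Some i" using nl_persist[OF ii r(1) c nl0] .
  have nr: "nr (E r i) = Some (n-1-i)" using nr_persist[OF ii r(2) c nr0] .
  show False using GEh(20)[OF ii, of r] c nl nr unfolding gB_def by auto
qed

lemma LiveEnd:
  assumes "i = 0 \<or> i + 1 = n" "i < n" "dst i s \<le> r"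
  shows "col (E r i) \<noteq> None"
  using GEh(1)[OF assms(2), of r] GEh(21)[OF assms(2), of r] assms unfolding hA_def gE_def by auto

lemma fl_nl: "i < n \<Longrightarrow> fl (E r i) \<Longrightarrow> nl (E r i) = Some i" using GEh(10) unfolding hfl_def by auto
lemma fr_nr: "i < n \<Longrightarrow> fr (E r i) \<Longrightarrow> nr (E r i) = Some (n-1-i)" using GEh(11) unfolding hfr_def by auto


definition Rn where "Rn = 2 * n - 1 - n div k"

lemma qn: "n div k \<le> n" by simp

lemma Rn_ge: "n - 1 \<le> Rn" unfolding Rn_def using qn by linarith

lemma arithA:
  assumes k2: "2 \<le> k" and x: "x < ribbon_size n k 1"
  shows "n - 1 + x \<le> Rn" "2 * k * x \<le> Rn + x"
proof -
  obtain q m where qm: "q = n div k" "m = n mod k" by simp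
  have nq: "n = k * q + m" using qm by simp
  have mk: "m < k" using k1 qm by simp
  have c1: "ribbon_size n k 1 = q + (if 1 \<le> m then 1 else 0)" using size1[OF k1] qm by simp
  have R: "Rn = 2 * n - 1 - q" unfolding Rn_def qm ..
  have kq: "2 * q \<le> k * q" using k2 by (intro mult_le_mono1) simp
  have xq: "x \<le> q" using x c1 by (cases "1 \<le> m") auto
  show "n - 1 + x \<le> Rn" unfolding R using xq kq nq mk by linarith
  have e1: "2 * k * x = (2 * k - 1) * x + x" using k1 by (cases k) (simp_all add: algebra_simps)
  show "2 * k * x \<le> Rn + x"
  proof (cases "1 \<le> m")
    case True
    have "(2 * k - 1) * x \<le> (2 * k - 1) * q" using xq by (intro mult_le_mono2)
    moreover have "(2 * k - 1) * q + q = 2 * (k * q)" using k1 by (cases k) (simp_all add: algebra_simps)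
    ultimately show ?thesis unfolding R e1 using nq True by linarith
  next
    case False
    hence m0: "m = 0" by simp
    have xq1: "x \<le> q - 1" using x c1 m0 by simp
    have "(2 * k - 1) * x \<le> (2 * k - 1) * (q - 1)" using xq1 by (intro mult_le_mono2)
    moreover have gen: "\<And>a q::nat. 1 \<le> q \<Longrightarrow> a * (q - 1) + a = a * q"
      by (case_tac q) (simp_all add: algebra_simps)
    moreover have "(2 * k - 1) * q + q = 2 * (k * q)" using k1 by (cases k) (simp_all add: algebra_simps)
    moreover have "1 \<le> q" using x c1 m0 by simp
    moreover have "1 \<le> q" using x c1 m0 by simp
    hence "(2 * k - 1) * (q - 1) + (2 * k - 1) = (2 * k - 1) * q" using gen by blast
    ultimately show ?thesis unfolding R e1 using nq m0 k1 by linarith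
  qed
qed

lemma sizes_k2:
  assumes k2: "2 \<le> k"
  shows "n div k \<le> ribbon_size n k k" "ribbon_size n k k \<le> ribbon_size n k 1" "n div k \<le> ribbon_size n k 1"
  using size1[OF k1, of n] sizek[OF k2, of n] by auto

lemma decided_k1:
  assumes kk: "k = 1" and i: "0 < i" "i + 1 < n"
  shows "col (E Rn i) \<noteq> None"
proof -
  have ii: "i < n" using i by simp
  have R: "Rn = n - 1" unfolding Rn_def using kk by simp
  have sum: "Lt s i + Rt n s i = 2 * n - 2" using Rt_sum[OF ii] unfolding Lt_def by simp
  show ?thesis
  proof (cases "Lt s i \<le> Rt n s i")
    case True
    have LR: "Lt s i \<le> Rn" using True sum R by linarith
    have "fl (E (Lt s i) i) \<or> (\<exists>j'. 0 < j' \<and> j' \<le> i \<and> col (E (Lt s j' - 1) j') \<noteq> None)"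
      using LW[OF i(2)] .
    thus ?thesis
    proof
      assume "fl (E (Lt s i) i)"
      hence "nl (E (Lt s i) i) = Some i" using fl_nl ii by simp
      thus ?thesis using LiveL[OF i _ LR] kk ii unfolding R Lt_def by simp
    next
      assume "\<exists>j'. 0 < j' \<and> j' \<le> i \<and> col (E (Lt s j' - 1) j') \<noteq> None"
      then obtain j' where j': "0 < j'" "j' \<le> i" "col (E (Lt s j' - 1) j') \<noteq> None" by blast
      have jn: "j' < n" "j' + 1 < n" using j' i by auto
      have "Lt s j' \<le> Lt s j' - 1 \<or> Rt n s j' \<le> Lt s j' - 1"
        using GEh(16)[OF jn(1), of "Lt s j' - 1"] j' jn unfolding hCI_def by auto
      moreover have "1 \<le> Lt s j'" using j' unfolding Lt_def by simp
      ultimately have "Rt n s j' < Lt s j'" by linarith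
      moreover have "Rt n s i \<le> Rt n s j'" "Lt s j' \<le> Lt s i" using j' ii sn unfolding Rt_def Lt_def by auto
      ultimately show ?thesis using True by linarith
    qed
  next
    case False
    have RR: "Rt n s i \<le> Rn" using False sum R by linarith
    have "fr (E (Rt n s i) i) \<or> (\<exists>j'. i \<le> j' \<and> j' + 1 < n \<and> col (E (Rt n s j' - 1) j') \<noteq> None)"
      using RW[OF i(1) ii] .
    thus ?thesis
    proof
      assume "fr (E (Rt n s i) i)"
      hence "nr (E (Rt n s i) i) = Some (n-1-i)" using fr_nr ii by simp
      thus ?thesis using LiveR[OF i _ RR] kk ii unfolding R by simp
    next
      assume "\<exists>j'. i \<le> j' \<and> j' + 1 < n \<and> col (E (Rt n s j' - 1) j') \<noteq> None"
      then obtain j' where j': "i \<le> j'" "j' + 1 < n" "col (E (Rt n s j' - 1) j') \<noteq> None" by blast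
      have jn: "j' < n" "0 < j'" using j' i by auto
      have "Lt s j' \<le> Rt n s j' - 1 \<or> Rt n s j' \<le> Rt n s j' - 1"
        using GEh(16)[OF jn(1), of "Rt n s j' - 1"] j' jn unfolding hCI_def by auto
      moreover have "1 \<le> Rt n s j'" using j' unfolding Rt_def by simp
      ultimately have "Lt s j' < Rt n s j'" by linarith
      moreover have "Rt n s j' \<le> Rt n s i" "Lt s i \<le> Lt s j'" using j' ii sn unfolding Rt_def Lt_def by auto
      ultimately show ?thesis using False by linarith
    qed
  qed
qed


lemma blockL:
  assumes "0 < j" "j < n" "col (E (Lt s j - 1) j) \<noteq> None"
  shows "rc j = k"
proof -
  obtain c' where c': "col (E (Lt s j - 1) j) = Some c'" using assms by auto
  have "1 \<le> Lt s j" using assms unfolding Lt_def by simp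
  hence "c' = k" using GEh(15)[OF assms(2), of "Lt s j - 1"] assms c' unfolding hCk_def by auto
  thus ?thesis using correct[OF assms(2) c'] by simp
qed

lemma blockR:
  assumes "j + 1 < n" "col (E (Rt n s j - 1) j) \<noteq> None"
  shows "rc j = 1"
proof -
  have jn: "j < n" using assms by simp
  obtain c' where c': "col (E (Rt n s j - 1) j) = Some c'" using assms by auto
  have "1 \<le> Rt n s j" using assms unfolding Rt_def by simp
  hence "c' = 1" using GEh(14)[OF jn, of "Rt n s j - 1"] assms c' unfolding hC1_def by auto
  thus ?thesis using correct[OF jn c'] by simp
qed

lemma fl_or_k:
  assumes i: "0 < i" "i + 1 < n"
  shows "fl (E (Lt s i) i) \<or> rc i = k"
proof -
  have ii: "i < n" using i by simp
  have "fl (E (Lt s i) i) \<or> (\<exists>j'. 0 < j' \<and> j' \<le> i \<and> col (E (Lt s j' - 1) j') \<noteq> None)" using LW[OF i(2)] .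
  moreover
  { fix j' assume j': "0 < j'" "j' \<le> i" "col (E (Lt s j' - 1) j') \<noteq> None"
    hence "rc j' = k" using blockL[of j'] ii by simp
    moreover have "rc j' \<le> rc i" using rc_mono[OF k1, of j' i n] j' ii by simp
    moreover have "rc i \<le> k" using rc_props[OF k1 ii] by simp
    ultimately have "rc i = k" by simp }
  ultimately show ?thesis by blast
qed

lemma fr_or_1:
  assumes i: "0 < i" "i + 1 < n"
  shows "fr (E (Rt n s i) i) \<or> rc i = 1"
proof -
  have ii: "i < n" using i by simp
  have "fr (E (Rt n s i) i) \<or> (\<exists>j'. i \<le> j' \<and> j' + 1 < n \<and> col (E (Rt n s j' - 1) j') \<noteq> None)" using RW[OF i(1) ii] .
  moreover
  { fix j' assume j': "i \<le> j'" "j' + 1 < n" "col (E (Rt n s j' - 1) j') \<noteq> None"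
    hence "rc j' = 1" using blockR[of j'] by simp
    moreover have "rc i \<le> rc j'" using rc_mono[OF k1, of i j' n] j' by simp
    moreover have "1 \<le> rc i" using rc_props[OF k1 ii] by simp
    ultimately have "rc i = 1" by simp }
  ultimately show ?thesis by blast
qed

lemma decided_k2:
  assumes k2: "2 \<le> k" and i: "0 < i" "i + 1 < n"
  shows "col (E Rn i) \<noteq> None"
proof -
  have ii: "i < n" using i by simp
  have sz: "n div k \<le> ribbon_size n k k" "ribbon_size n k k \<le> ribbon_size n k 1" "n div k \<le> ribbon_size n k 1"
    using sizes_k2[OF k2] .
  have R: "Rn = 2 * n - 1 - n div k" unfolding Rn_def ..
  have fk: "fl (E (Lt s i) i) \<or> rc i = k" and f1: "fr (E (Rt n s i) i) \<or> rc i = 1" using fl_or_k[OF i] fr_or_1[OF i] by auto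
  show ?thesis
  proof (cases "rc i = 1")
    case True
    have x: "i < ribbon_size n k 1" using rc_1_iff[OF k1 ii] True by simp
    note A = arithA[OF k2 x]
    have "rc i \<noteq> k" using True k2 by simp
    hence "fl (E (Lt s i) i)" using fk by simp
    hence "nl (E (Lt s i) i) = Some i" using fl_nl ii by simp
    moreover have "Lt s i \<le> Rn" using A sn unfolding Lt_def by linarith
    moreover have "2 * k * i \<le> Rn + s + i" using A by linarith
    ultimately show ?thesis using LiveL[OF i] by simp
  next
    case n1: False
    show ?thesis
    proof (cases "rc i = k")
      case True
      have "n - ribbon_size n k k \<le> i" using rc_k_iff[OF k1 ii] True by simp
      hence x: "n - 1 - i < ribbon_size n k 1" using sz ii by linarith
      note A = arithA[OF k2 x]
      have "fr (E (Rt n s i) i)" using f1 n1 by simp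
      hence "nr (E (Rt n s i) i) = Some (n-1-i)" using fr_nr ii by simp
      moreover have "Rt n s i \<le> Rn" using A sn unfolding Rt_def by linarith
      moreover have "2 * k * (n-1-i) \<le> Rn + (n-1-s) + (n-1-i)" using A by linarith
      ultimately show ?thesis using LiveR[OF i] by simp
    next
      case nk: False
      have "fl (E (Lt s i) i)" "fr (E (Rt n s i) i)" using fk f1 n1 nk by auto
      hence a: "nl (E (Lt s i) i) = Some i" "nr (E (Rt n s i) i) = Some (n-1-i)" using fl_nl fr_nr ii by auto
      have b1: "ribbon_size n k 1 \<le> i" using rc_1_iff[OF k1 ii] n1 by simp
      have b2: "i < n - ribbon_size n k k" using rc_k_iff[OF k1 ii] nk by simp
      have "Lt s i \<le> Rn" "Rt n s i \<le> Rn" using b1 b2 sz sn ii unfolding R Lt_def Rt_def by linarith+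
      thus ?thesis using LiveLR[OF i a] by simp
    qed
  qed
qed

lemma decided: "i < n \<Longrightarrow> col (E Rn i) \<noteq> None"
proof -
  assume ii: "i < n"
  show ?thesis
  proof (cases "i = 0 \<or> i + 1 = n")
    case True
    have "dst i s \<le> n - 1" using ii sn unfolding dst_def by auto
    hence "dst i s \<le> Rn" using Rn_ge by linarith
    thus ?thesis using LiveEnd[OF True ii] by simp
  next
    case False
    hence i: "0 < i" "i + 1 < n" using ii by auto
    show ?thesis
    proof (cases "k = 1")
      case True thus ?thesis using decided_k1[OF True i] by simp
    next
      case False hence "2 \<le> k" using k1 by simp
      thus ?thesis using decided_k2[OF _ i] by simp
    qed
  qed
qed

lemma undec_lt: "i < n \<Longrightarrow> col (E r i) = None \<Longrightarrow> r < Rn"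
proof (rule ccontr)
  assume a: "i < n" "col (E r i) = None" "\<not> r < Rn"
  hence "Rn \<le> r" by simp
  hence "col (E r i) = col (E Rn i)" by (rule col_persist[OF decided[OF a(1)]])
  thus False using a decided[OF a(1)] by simp
qed

lemma Rn_real: "real Rn \<le> (2 - 1 / real k) * real n + real k"
proof -
  have kp: "0 < real k" using k1 by simp
  have e0: "k * (n div k) + n mod k = n" by (rule mult_div_mod_eq)
  have "real (k * (n div k) + n mod k) = real n" using e0 by simp
  hence e: "real k * real (n div k) + real (n mod k) = real n" by (simp only: of_nat_add of_nat_mult)
  have "real (n mod k) < real k" using k1 by simp
  hence "real n < real k * (real (n div k) + 1)" using e by (simp add: algebra_simps)
  hence "real n / real k < real (n div k) + 1" using kp by (simp add: field_simps)
  moreover have "Rn \<le> 2 * n - n div k" unfolding Rn_def by simp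
  moreover have "real (2 * n - n div k) = 2 * real n - real (n div k)"
  proof -
    have "n div k \<le> 2 * n" using qn by linarith
    hence "real (2 * n - n div k) = real (2 * n) - real (n div k)" by (rule of_nat_diff)
    thus ?thesis by simp
  qed
  ultimately have "real Rn \<le> 2 * real n - real n / real k + 1"
  proof -
    assume h1: "real n / real k < real (n div k) + 1" and h2: "Rn \<le> 2 * n - n div k"
      and h3: "real (2 * n - n div k) = 2 * real n - real (n div k)"
    have "real Rn \<le> real (2 * n - n div k)" using h2 by (simp only: of_nat_le_iff)
    thus ?thesis using h1 h3 by linarith
  qed
  moreover have "(2 - 1 / real k) * real n = 2 * real n - real n / real k" by (simp add: algebra_simps)
  ultimately show ?thesis using k1 by simp
qed

end

abbreviation bl where "bl v \<equiv> floorlog 2 v"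

definition S :: "nat \<Rightarrow> nat" where "S m = (\<Sum>v=1..m. bl v)"

lemma S_0: "S 0 = 0" by (simp add: S_def)
lemma S_Suc: "S (Suc m) = S m + bl (Suc m)" by (simp add: S_def)

lemma bl_1: "bl 1 = 1" by (simp add: floorlog_def)
lemma bl_S0: "bl (Suc 0) = 1" by (simp add: floorlog_def)
lemma S_1: "S 1 = 1" by (simp add: S_def floorlog_def)
lemma S_S0: "S (Suc 0) = 1" by (simp add: S_def floorlog_def)

lemma bl_ge2: "2 \<le> v \<Longrightarrow> 2 \<le> bl v"
proof -
  assume v: "2 \<le> v"
  have "v < 2 ^ bl v" using floorlog_bounds[of v 2] v by simp
  show "2 \<le> bl v"
  proof (rule ccontr)
    assume "\<not> 2 \<le> bl v"
    hence "bl v \<le> 1" by simp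
    hence "(2::nat) ^ bl v \<le> 2" using power_increasing[of "bl v" 1 "2::nat"] by simp
    thus False using \<open>v < 2 ^ bl v\<close> v by simp
  qed
qed

lemma bl_le_log: "0 < v \<Longrightarrow> real (bl v) \<le> log 2 (real v) + 1"
proof -
  assume v: "0 < v"
  have "2 ^ (bl v - 1) \<le> v" using floorlog_bounds[of v 2] v by simp
  hence "real (2 ^ (bl v - 1)) \<le> real v" by (simp only: of_nat_le_iff)
  hence "(2::real) ^ (bl v - 1) \<le> real v" by simp
  hence "log 2 ((2::real) ^ (bl v - 1)) \<le> log 2 (real v)" using v by (subst log_le_cancel_iff) auto
  hence "real (bl v - 1) \<le> log 2 (real v)" by (simp add: log_nat_power)
  moreover have "1 \<le> bl v" using v by (simp add: floorlog_def)
  ultimately show ?thesis by (simp add: of_nat_diff)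
qed

lemma bern: "1 \<le> m \<Longrightarrow> 1 \<le> real m * (log 2 (real m + 1) - log 2 (real m))"
proof -
  assume m: "1 \<le> m"
  have mp: "0 < real m" using m by simp
  have "0 < 1 / real m" using mp by simp
  hence "-1 \<le> 1 / real m" by linarith
  hence "1 + real m * (1 / real m) \<le> (1 + 1 / real m) ^ m"
    by (rule Bernoulli_inequality)
  hence "2 \<le> (1 + 1 / real m) ^ m" using mp by simp
  hence "log 2 2 \<le> log 2 ((1 + 1 / real m) ^ m)" using mp by (subst log_le_cancel_iff) auto
  also have "\<dots> = real m * log 2 (1 + 1 / real m)" using mp by (simp add: log_nat_power)
  also have "1 + 1 / real m = (real m + 1) / real m" using mp by (simp add: field_simps)
  also have "log 2 ((real m + 1) / real m) = log 2 (real m + 1) - log 2 (real m)"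
    using mp by (simp add: log_divide)
  finally show ?thesis by simp
qed

lemma S_bound: "1 \<le> m \<Longrightarrow> real (S m) \<le> real m * log 2 (real m) + 1"
proof (induction m rule: dec_induct)
  case base thus ?case by (simp add: S_1 S_S0)
next
  case (step m)
  have "real (S (Suc m)) = real (S m) + real (bl (Suc m))" by (simp add: S_Suc)
  also have "\<dots> \<le> real m * log 2 (real m) + 1 + (log 2 (real m + 1) + 1)"
    using step.IH bl_le_log[of "Suc m"] by (simp add: add.commute)
  also have "\<dots> \<le> real (Suc m) * log 2 (real (Suc m)) + 1"
  proof -
    have "1 \<le> real m * (log 2 (real m + 1) - log 2 (real m))" using bern step.hyps by simp
    thus ?thesis by (simp add: algebra_simps)
  qed
  finally show ?case .
qed

lemma S_super: "S a + S b + (if 1 \<le> a \<and> 1 \<le> b then 1 else 0) \<le> S (a + b)"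
proof (induction b)
  case 0 thus ?case by (simp add: S_0)
next
  case (Suc b)
  have m: "bl (Suc b) \<le> bl (Suc (a + b))" by (rule floorlog_mono) simp
  show ?case
  proof (cases "b = 0")
    case True
    show ?thesis
    proof (cases "a = 0")
      case True thus ?thesis using \<open>b = 0\<close> by (simp add: S_0 S_Suc)
    next
      case False
      hence "2 \<le> bl (Suc a)" by (intro bl_ge2) simp
      thus ?thesis using \<open>b = 0\<close> False by (simp add: S_0 S_Suc bl_S0)
    qed
  next
    case False
    thus ?thesis using Suc.IH m by (simp add: S_Suc)
  qed
qed

lemma S_mono: "a \<le> b \<Longrightarrow> S a \<le> S b"
  using S_super[of a "b - a"] by simp

lemma S_n: "2 \<le> n \<Longrightarrow> S (n - 1) + 2 \<le> S n"
proof -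
  assume n: "2 \<le> n"
  have "S n = S (n - 1) + bl n" using S_Suc[of "n-1"] n by simp
  thus ?thesis using bl_ge2[OF n] by simp
qed

lemma bits_k2: "real (3 * S (n - 1)) \<le> 3 * real n * log 2 (real n)"
proof (cases "n \<le> 1")
  case True
  hence "S (n - 1) = 0" by (simp add: S_0)
  moreover have "0 \<le> real n * log 2 (real n)" using True by (cases n) auto
  ultimately show ?thesis by simp
next
  case False
  hence n: "2 \<le> n" by simp
  have "real (S n) \<le> real n * log 2 (real n) + 1" using S_bound[of n] n by simp
  moreover have "S (n - 1) + 2 \<le> S n" using S_n[OF n] .
  ultimately have "real (S (n - 1)) \<le> real n * log 2 (real n)" by linarith
  thus ?thesis by simp
qed

lemma bits_k1:
  assumes sn: "s < n"
  shows "real (S s + S (n - 1 - s) + S (min (n - 1) (n - s)) + S (min (n - 1) (s + 1))) \<le> 2 * real n * log 2 (real n)"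
proof (cases "n \<le> 1")
  case True
  hence "n = 1" "s = 0" using sn by auto
  thus ?thesis by (simp add: S_0)
next
  case False
  hence n: "2 \<le> n" by simp
  have Sn: "real (S n) \<le> real n * log 2 (real n) + 1" using S_bound[of n] n by simp
  have sn1: "S (n - 1) + 2 \<le> S n" using S_n[OF n] .
  have "S s + S (n - 1 - s) + S (min (n - 1) (n - s)) + S (min (n - 1) (s + 1)) + 2 \<le> 2 * S n"
  proof (cases "s = 0")
    case True
    have "min (n - 1) (n - s) = n - 1" "min (n - 1) (s + 1) = 1" "n - 1 - s = n - 1" using n True by auto
    hence "S s + S (n - 1 - s) + S (min (n - 1) (n - s)) + S (min (n - 1) (s + 1)) = 2 * S (n - 1) + 1"
      using True by (simp add: S_0 S_1 S_S0)
    thus ?thesis using sn1 by linarith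
  next
    case s0: False
    show ?thesis
    proof (cases "s = n - 1")
      case True
      have "min (n - 1) (n - s) = 1" "min (n - 1) (s + 1) = n - 1" "n - 1 - s = 0" using True n by auto
      thus ?thesis using True sn1 n by (simp add: S_0 S_1 S_S0)
    next
      case False
      hence s1: "1 \<le> s" "s + 2 \<le> n" using s0 sn by auto
      have a: "S s + S (n - s) + 1 \<le> S n"
      proof -
        have "1 \<le> n - s" using s1 by simp
        thus ?thesis using S_super[of s "n - s"] s1 by simp
      qed
      have b: "S (n - 1 - s) + S (s + 1) + 1 \<le> S n"
      proof -
        have "1 \<le> n - 1 - s" "n - 1 - s + (s + 1) = n" using s1 by auto
        thus ?thesis using S_super[of "n - 1 - s" "s + 1"] s1 by simp
      qed
      have "min (n - 1) (n - s) = n - s" "min (n - 1) (s + 1) = s + 1" using s1 by auto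
      thus ?thesis using a b by simp
    qed
  qed
  hence "real (S s + S (n - 1 - s) + S (min (n - 1) (n - s)) + S (min (n - 1) (s + 1))) + 2 \<le> 2 * real (S n)"
    by (simp only: of_nat_add of_nat_mult of_nat_le_iff[symmetric])
  thus ?thesis using Sn by linarith
qed

lemma mb_left: "msg_bits (send_left st) = (if fmL st then opt_bits (map_option Suc (mid st)) else 0) + (if fr st then opt_bits (map_option Suc (nr st)) else 0)"
  by (simp add: send_left_def msg_bits_def opt_bits_def)

lemma mb_right: "msg_bits (send_right st) = (if fmR st then opt_bits (map_option Suc (mid st)) else 0) + (if fl st then opt_bits (map_option Suc (nl st)) else 0)"
  by (simp add: send_right_def msg_bits_def opt_bits_def)

lemma sum_once:
  fixes R t :: nat
  assumes "\<And>r. P r \<Longrightarrow> r = t \<and> Q"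
  shows "(\<Sum>r<R. if P r then v else 0) \<le> (if Q then v else (0::nat))"
proof (cases Q)
  case True
  have pt: "\<And>r. (if P r then v else 0) \<le> (if r = t then v else (0::nat))"
  proof -
    fix r show "(if P r then v else 0) \<le> (if r = t then v else (0::nat))"
    proof (cases "P r")
      case True hence "r = t" using assms by blast
      thus ?thesis using True by simp
    next
      case False thus ?thesis by simp
    qed
  qed
  have "(\<Sum>r<R. if P r then v else 0) \<le> (\<Sum>r<R. if r = t then v else 0)"
    by (rule sum_mono) (rule pt)
  also have "\<dots> = (if t \<in> {..<R} then v else 0)" by (rule sum.delta) simp
  also have "\<dots> \<le> v" by simp
  finally show ?thesis using True by simp
next
  case False
  hence "\<And>r. \<not> P r" using assms by blast
  thus ?thesis by simp
qed

lemma G1: "(\<Sum>i<M. bl (Suc i)) = S M"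
  by (induction M) (simp_all add: S_0 S_Suc)

lemma G2: "M \<le> n \<Longrightarrow> (\<Sum>i\<in>{n-M..<n}. bl (n - i)) = S M"
proof (induction M)
  case 0 thus ?case by (simp add: S_0)
next
  case (Suc M)
  have e: "{n - Suc M..<n} = insert (n - Suc M) {n-M..<n}" using Suc.prems by auto
  have "n - Suc M \<notin> {n-M..<n}" using Suc.prems by auto
  hence "(\<Sum>i\<in>{n - Suc M..<n}. bl (n - i)) = bl (n - (n - Suc M)) + (\<Sum>i\<in>{n-M..<n}. bl (n - i))"
    unfolding e by simp
  also have "n - (n - Suc M) = Suc M" using Suc.prems by simp
  finally show ?case using Suc.IH Suc.prems by (simp add: S_Suc)
qed

lemma G3: "(\<Sum>i\<in>{a..<a+M}. bl (Suc (i - a))) = S M"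
proof (induction M)
  case 0 thus ?case by (simp add: S_0)
next
  case (Suc M)
  have "(\<Sum>i\<in>{a..<a + Suc M}. bl (Suc (i - a))) = (\<Sum>i\<in>{a..<a+M}. bl (Suc (i - a))) + bl (Suc M)"
    by simp
  thus ?case using Suc.IH by (simp add: S_Suc)
qed

lemma sum_filter: "(\<Sum>i<(n::nat). if P i then g i else (0::nat)) = sum g {i \<in> {..<n}. P i}"
  by (rule sum.inter_filter[symmetric]) simp

context X begin

lemma fl_recv: "0 < i \<Longrightarrow> fl (E (Suc t) i) \<Longrightarrow> col (E t i) = None"
  unfolding E_Suc step_fields pre_fields by (auto split: if_split_asm)

lemma fr_recv: "i + 1 < n \<Longrightarrow> fr (E (Suc t) i) \<Longrightarrow> col (E t i) = None"
  unfolding E_Suc step_fields pre_fields by (auto split: if_split_asm)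

lemma FL1:
  assumes kk: "k = 1" and i: "i + 1 < n" and f: "fl (E r i)"
  shows "i + s \<le> n - 1"
proof (cases "i = 0")
  case True thus ?thesis using sn by simp
next
  case False
  hence i0: "0 < i" by simp
  have ii: "i < n" using i by simp
  have rL: "r = Lt s i" using GEh(10)[OF ii, of r] f unfolding hfl_def by auto
  have L1: "1 \<le> Lt s i" using i0 unfolding Lt_def by simp
  define t where "t = Lt s i - 1"
  have t: "Lt s i = Suc t" using L1 unfolding t_def by simp
  have ct: "col (E t i) = None" using fl_recv[OF i0] f rL t by simp
  have sum: "Lt s i + Rt n s i = 2 * n - 2" using Rt_sum[OF ii] unfolding Lt_def by simp
  show ?thesis
  proof (rule ccontr)
    assume "\<not> i + s \<le> n - 1"
    hence lt: "Rt n s i < Lt s i" using sum unfolding Lt_def by linarith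
    have "fr (E (Rt n s i) i) \<or> (\<exists>j'. i \<le> j' \<and> j' + 1 < n \<and> col (E (Rt n s j' - 1) j') \<noteq> None)"
      using RW[OF i0 ii] .
    thus False
    proof
      assume "fr (E (Rt n s i) i)"
      hence "nr (E (Rt n s i) i) = Some (n-1-i)" using fr_nr ii by simp
      moreover have "2 * k * (n-1-i) \<le> Rt n s i + (n-1-s) + (n-1-i)" using kk unfolding Rt_def by simp
      ultimately have cc: "col (E (Rt n s i) i) \<noteq> None" using LiveR[OF i0 i] by simp
      have "Rt n s i \<le> t" using lt t by simp
      hence "col (E t i) = col (E (Rt n s i) i)" by (rule col_persist[OF cc])
      hence "col (E t i) \<noteq> None" using cc by simp
      thus False using ct by simp
    next
      assume "\<exists>j'. i \<le> j' \<and> j' + 1 < n \<and> col (E (Rt n s j' - 1) j') \<noteq> None"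
      then obtain j' where j': "i \<le> j'" "j' + 1 < n" "col (E (Rt n s j' - 1) j') \<noteq> None" by blast
      show False
      proof (cases "j' = i")
        case True
        have le: "Rt n s i - 1 \<le> t" using lt t by simp
        have cc: "col (E (Rt n s i - 1) i) \<noteq> None" using j' True by simp
        have "col (E t i) = col (E (Rt n s i - 1) i)" by (rule col_persist[OF cc le])
        hence "col (E t i) \<noteq> None" using cc by simp
        thus False using ct by simp
      next
        case False
        have jn: "j' < n" using j' by simp
        have "Lt s j' \<le> Rt n s j' - 1 \<or> Rt n s j' \<le> Rt n s j' - 1"
          using GEh(16)[OF jn, of "Rt n s j' - 1"] j' i0 unfolding hCI_def by auto
        moreover have "1 \<le> Rt n s j'" using j' unfolding Rt_def by simp
        ultimately have "Lt s j' < Rt n s j'" by linarith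
        moreover have "Rt n s j' \<le> Rt n s i" "Lt s i \<le> Lt s j'" using j' ii sn unfolding Rt_def Lt_def by auto
        ultimately show False using lt by linarith
      qed
    qed
  qed
qed

lemma FR1:
  assumes kk: "k = 1" and i0: "0 < i" and ii: "i < n" and f: "fr (E r i)"
  shows "n - 1 \<le> i + s"
proof (cases "i + 1 = n")
  case True thus ?thesis by simp
next
  case False
  hence i: "i + 1 < n" using ii by simp
  have rR: "r = Rt n s i" using GEh(11)[OF ii, of r] f unfolding hfr_def by auto
  have R1: "1 \<le> Rt n s i" using i unfolding Rt_def by simp
  define t where "t = Rt n s i - 1"
  have t: "Rt n s i = Suc t" using R1 unfolding t_def by simp
  have ct: "col (E t i) = None" using fr_recv[OF i] f rR t by simp
  have sum: "Lt s i + Rt n s i = 2 * n - 2" using Rt_sum[OF ii] unfolding Lt_def by simp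
  show ?thesis
  proof (rule ccontr)
    assume "\<not> n - 1 \<le> i + s"
    hence lt: "Lt s i < Rt n s i" using sum unfolding Lt_def by linarith
    have "fl (E (Lt s i) i) \<or> (\<exists>j'. 0 < j' \<and> j' \<le> i \<and> col (E (Lt s j' - 1) j') \<noteq> None)"
      using LW[OF i] .
    thus False
    proof
      assume "fl (E (Lt s i) i)"
      hence "nl (E (Lt s i) i) = Some i" using fl_nl ii by simp
      moreover have "2 * k * i \<le> Lt s i + s + i" using kk unfolding Lt_def by simp
      ultimately have cc: "col (E (Lt s i) i) \<noteq> None" using LiveL[OF i0 i] by simp
      have "Lt s i \<le> t" using lt t by simp
      hence "col (E t i) = col (E (Lt s i) i)" by (rule col_persist[OF cc])
      hence "col (E t i) \<noteq> None" using cc by simp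
      thus False using ct by simp
    next
      assume "\<exists>j'. 0 < j' \<and> j' \<le> i \<and> col (E (Lt s j' - 1) j') \<noteq> None"
      then obtain j' where j': "0 < j'" "j' \<le> i" "col (E (Lt s j' - 1) j') \<noteq> None" by blast
      show False
      proof (cases "j' = i")
        case True
        have le: "Lt s i - 1 \<le> t" using lt t by simp
        have cc: "col (E (Lt s i - 1) i) \<noteq> None" using j' True by simp
        have "col (E t i) = col (E (Lt s i - 1) i)" by (rule col_persist[OF cc le])
        hence "col (E t i) \<noteq> None" using cc by simp
        thus False using ct by simp
      next
        case False
        have jn: "j' < n" "j' + 1 < n" using j' i by auto
        have "Lt s j' \<le> Lt s j' - 1 \<or> Rt n s j' \<le> Lt s j' - 1"
          using GEh(16)[OF jn(1), of "Lt s j' - 1"] j' jn unfolding hCI_def by auto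
        moreover have "1 \<le> Lt s j'" using j' unfolding Lt_def by simp
        ultimately have "Rt n s j' < Lt s j'" by linarith
        moreover have "Rt n s i \<le> Rt n s j'" "Lt s j' \<le> Lt s i" using j' ii sn unfolding Rt_def Lt_def by auto
        ultimately show False using lt by linarith
      qed
    qed
  qed
qed


definition WLc where "WLc i = (k = 1 \<longrightarrow> i + s \<le> n - 1)"
definition WRc where "WRc i = (k = 1 \<longrightarrow> n - 1 \<le> i + s)"
definition B where "B i = (if 0 < i \<and> i \<le> s then bl (Suc (dst i s)) else 0) + (if 0 < i \<and> WRc i then bl (n - i) else 0)
   + (if s \<le> i \<and> i + 1 < n then bl (Suc (dst i s)) else 0) + (if i + 1 < n \<and> WLc i then bl (Suc i) else 0)"
definition rb where "rb r i = (if 0 < i then msg_bits (send_left (E r i)) else 0) + (if i + 1 < n then msg_bits (send_right (E r i)) else 0)"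

lemma rb_eq:
  assumes ii: "i < n"
  shows "rb r i = (if fmL (E r i) then bl (Suc (dst i s)) else 0) + (if fr (E r i) then bl (n - i) else 0)
    + ((if fmR (E r i) then bl (Suc (dst i s)) else 0) + (if fl (E r i) then bl (Suc i) else 0))"
proof -
  have a1: "fmL (E r i) \<Longrightarrow> mid (E r i) = Some (dst i s) \<and> 0 < i" using GEh(7,9)[OF ii, of r] unfolding hFL_def hMF_def by auto
  have a2: "fmR (E r i) \<Longrightarrow> mid (E r i) = Some (dst i s) \<and> i + 1 < n" using GEh(6,9)[OF ii, of r] unfolding hFR_def hMF_def by auto
  have a3: "fr (E r i) \<Longrightarrow> nr (E r i) = Some (n - 1 - i) \<and> 0 < i" using GEh(11)[OF ii, of r] unfolding hfr_def by auto
  have a4: "fl (E r i) \<Longrightarrow> nl (E r i) = Some i \<and> i + 1 < n" using GEh(10)[OF ii, of r] unfolding hfl_def by auto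
  have nn: "Suc (n - 1 - i) = n - i" using ii by simp
  have L: "(if 0 < i then msg_bits (send_left (E r i)) else 0) = (if fmL (E r i) then bl (Suc (dst i s)) else 0) + (if fr (E r i) then bl (n - i) else 0)"
    unfolding mb_left using a1 a3 nn by (auto simp: opt_bits_def)
  have R: "(if i + 1 < n then msg_bits (send_right (E r i)) else 0) = (if fmR (E r i) then bl (Suc (dst i s)) else 0) + (if fl (E r i) then bl (Suc i) else 0)"
    unfolding mb_right using a2 a4 by (auto simp: opt_bits_def)
  show ?thesis unfolding rb_def L R ..
qed

lemma per_agent:
  assumes ii: "i < n"
  shows "(\<Sum>r<R. rb r i) \<le> B i"
proof -
  have e: "(\<Sum>r<R. rb r i) = (\<Sum>r<R. if fmL (E r i) then bl (Suc (dst i s)) else 0) + (\<Sum>r<R. if fr (E r i) then bl (n - i) else 0)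
    + ((\<Sum>r<R. if fmR (E r i) then bl (Suc (dst i s)) else 0) + (\<Sum>r<R. if fl (E r i) then bl (Suc i) else 0))"
    unfolding rb_eq[OF ii] sum.distrib ..
  have s1: "(\<Sum>r<R. if fmL (E r i) then bl (Suc (dst i s)) else 0) \<le> (if 0 < i \<and> i \<le> s then bl (Suc (dst i s)) else 0)"
    by (rule sum_once[where t="dst i s"]) (use GEh(7)[OF ii] in \<open>auto simp: hFL_def\<close>)
  have s2: "(\<Sum>r<R. if fr (E r i) then bl (n - i) else 0) \<le> (if 0 < i \<and> WRc i then bl (n - i) else 0)"
  proof (rule sum_once[where t="Rt n s i"])
    fix r assume f: "fr (E r i)"
    have "r = Rt n s i \<and> 0 < i" using GEh(11)[OF ii, of r] f unfolding hfr_def by auto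
    moreover have "WRc i" unfolding WRc_def using FR1 f ii \<open>r = Rt n s i \<and> 0 < i\<close> by blast
    ultimately show "r = Rt n s i \<and> 0 < i \<and> WRc i" by simp
  qed
  have s3: "(\<Sum>r<R. if fmR (E r i) then bl (Suc (dst i s)) else 0) \<le> (if s \<le> i \<and> i + 1 < n then bl (Suc (dst i s)) else 0)"
    by (rule sum_once[where t="dst i s"]) (use GEh(6)[OF ii] in \<open>auto simp: hFR_def\<close>)
  have s4: "(\<Sum>r<R. if fl (E r i) then bl (Suc i) else 0) \<le> (if i + 1 < n \<and> WLc i then bl (Suc i) else 0)"
  proof (rule sum_once[where t="Lt s i"])
    fix r assume f: "fl (E r i)"
    have "r = Lt s i \<and> i + 1 < n" using GEh(10)[OF ii, of r] f unfolding hfl_def by auto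
    moreover have "WLc i" unfolding WLc_def using FL1 f \<open>r = Lt s i \<and> i + 1 < n\<close> by blast
    ultimately show "r = Lt s i \<and> i + 1 < n \<and> WLc i" by simp
  qed
  show ?thesis unfolding e B_def using s1 s2 s3 s4 by linarith
qed

lemma total_bits: "(\<Sum>r<R. round_bits n k s r) \<le> (\<Sum>i<n. B i)"
proof -
  have "(\<Sum>r<R. round_bits n k s r) = (\<Sum>r<R. \<Sum>i<n. rb r i)" unfolding round_bits_def rb_def ..
  also have "\<dots> = (\<Sum>i<n. \<Sum>r<R. rb r i)" by (rule sum.swap)
  also have "\<dots> \<le> (\<Sum>i<n. B i)" by (rule sum_mono) (rule per_agent, simp)
  finally show ?thesis .
qed


definition MLw where "MLw = (if k = 1 then min (n - 1) (n - s) else n - 1)"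
definition MRw where "MRw = (if k = 1 then min (n - 1) (s + 1) else n - 1)"

lemma c1: "(\<Sum>i<n. if 0 < i \<and> i \<le> s then bl (Suc (dst i s)) else 0) = S s"
proof -
  have st: "{i \<in> {..<n}. 0 < i \<and> i \<le> s} = {(s+1) - s..<s+1}" using sn by auto
  have "(\<Sum>i<n. if 0 < i \<and> i \<le> s then bl (Suc (dst i s)) else 0) = sum (\<lambda>i. bl (Suc (dst i s))) {(s+1) - s..<s+1}"
    unfolding sum_filter st ..
  also have "\<dots> = (\<Sum>i\<in>{(s+1) - s..<s+1}. bl ((s+1) - i))"
    by (rule sum.cong) (auto simp: dst_def Suc_diff_le)
  also have "\<dots> = S s" by (rule G2) simp
  finally show ?thesis .
qed

lemma c2: "(\<Sum>i<n. if s \<le> i \<and> i + 1 < n then bl (Suc (dst i s)) else 0) = S (n - 1 - s)"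
proof -
  have st: "{i \<in> {..<n}. s \<le> i \<and> i + 1 < n} = {s..<s + (n - 1 - s)}" using sn by auto
  have "(\<Sum>i<n. if s \<le> i \<and> i + 1 < n then bl (Suc (dst i s)) else 0) = sum (\<lambda>i. bl (Suc (dst i s))) {s..<s + (n - 1 - s)}"
    unfolding sum_filter st ..
  also have "\<dots> = (\<Sum>i\<in>{s..<s + (n - 1 - s)}. bl (Suc (i - s)))"
    by (rule sum.cong) (auto simp: dst_def)
  also have "\<dots> = S (n - 1 - s)" by (rule G3)
  finally show ?thesis .
qed

lemma c3: "(\<Sum>i<n. if i + 1 < n \<and> WLc i then bl (Suc i) else 0) = S MLw"
proof -
  have st: "{i \<in> {..<n}. i + 1 < n \<and> WLc i} = {..<MLw}" unfolding MLw_def WLc_def using sn by auto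
  show ?thesis unfolding sum_filter st G1 ..
qed

lemma c4: "(\<Sum>i<n. if 0 < i \<and> WRc i then bl (n - i) else 0) = S MRw"
proof -
  have st: "{i \<in> {..<n}. 0 < i \<and> WRc i} = {n - MRw..<n}" unfolding MRw_def WRc_def using sn by auto
  have "MRw \<le> n" unfolding MRw_def using sn by (simp add: min_def)
  thus ?thesis unfolding sum_filter st by (rule G2)
qed

lemma sumB: "(\<Sum>i<n. B i) = S s + S (n - 1 - s) + S MLw + S MRw"
proof -
  have "(\<Sum>i<n. B i) = (\<Sum>i<n. if 0 < i \<and> i \<le> s then bl (Suc (dst i s)) else 0) + (\<Sum>i<n. if 0 < i \<and> WRc i then bl (n - i) else 0)
   + (\<Sum>i<n. if s \<le> i \<and> i + 1 < n then bl (Suc (dst i s)) else 0) + (\<Sum>i<n. if i + 1 < n \<and> WLc i then bl (Suc i) else 0)"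
    unfolding B_def sum.distrib ..
  thus ?thesis unfolding c1 c2 c3 c4 by simp
qed

lemma bits_final: "real (\<Sum>r<R. round_bits n k s r) \<le> (4 - 2 / real k) * real n * log 2 (real n)"
proof -
  have "(\<Sum>r<R. round_bits n k s r) \<le> S s + S (n - 1 - s) + S MLw + S MRw" using total_bits sumB by simp
  hence T: "real (\<Sum>r<R. round_bits n k s r) \<le> real (S s + S (n - 1 - s) + S MLw + S MRw)" by (simp only: of_nat_le_iff)
  have nl: "0 \<le> real n * log 2 (real n)" using sn by simp
  show ?thesis
  proof (cases "k = 1")
    case True
    have "real (S s + S (n - 1 - s) + S MLw + S MRw) \<le> 2 * real n * log 2 (real n)"
      using bits_k1[OF sn] True unfolding MLw_def MRw_def by simp
    thus ?thesis using T True by simp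
  next
    case False
    hence k2: "2 \<le> k" using k1 by simp
    have "S s + S (n - 1 - s) \<le> S (n - 1)" using S_super[of s "n - 1 - s"] sn by simp
    moreover have "MLw = n - 1" "MRw = n - 1" unfolding MLw_def MRw_def using False by auto
    ultimately have "S s + S (n - 1 - s) + S MLw + S MRw \<le> 3 * S (n - 1)" by simp
    hence "real (S s + S (n - 1 - s) + S MLw + S MRw) \<le> real (3 * S (n - 1))" by (simp only: of_nat_le_iff)
    also have "\<dots> \<le> 3 * real n * log 2 (real n)" by (rule bits_k2)
    also have "\<dots> \<le> (4 - 2 / real k) * real n * log 2 (real n)"
    proof -
      have "2 / real k \<le> 1" using k2 by (simp add: field_simps)
      hence "3 \<le> 4 - 2 / real k" by simp
      thus ?thesis using nl by (simp add: mult.assoc mult_right_mono)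
    qed
    finally show ?thesis using T by linarith
  qed
qed

end

lemma ob_le:
  assumes "\<And>v. x = Some v \<Longrightarrow> v \<le> N" "1 \<le> N"
  shows "real (opt_bits x) \<le> log 2 (real N) + 1"
proof -
  have lN: "0 \<le> log 2 (real N)" using assms(2) by simp
  show ?thesis
  proof (cases x)
    case None thus ?thesis using lN by (simp add: opt_bits_def)
  next
    case (Some v)
    show ?thesis
    proof (cases "v = 0")
      case True thus ?thesis using Some lN by (simp add: opt_bits_def floorlog_def)
    next
      case False
      hence "real (bl v) \<le> log 2 (real v) + 1" by (intro bl_le_log) simp
      moreover have "log 2 (real v) \<le> log 2 (real N)" using assms(1)[OF Some] False by (subst log_le_cancel_iff) auto
      ultimately show ?thesis using Some by (simp add: opt_bits_def)
    qed
  qed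
qed

lemma is_ribbon_imp:
  assumes eq: "\<And>i. i < n \<Longrightarrow> f i = g i" and r: "is_ribbon n k f"
  shows "is_ribbon n k g"
proof -
  have e: "\<And>a. {i. i < n \<and> g i = a} = {i. i < n \<and> f i = a}" using eq by auto
  note rr = r[unfolded is_ribbon_def]
  show ?thesis unfolding is_ribbon_def e
  proof (intro conjI allI impI)
    fix i assume "i < n" thus "1 \<le> g i" using rr eq by metis
  next
    fix i assume "i < n" thus "g i \<le> k" using rr eq by metis
  next
    fix i j m assume h: "i \<le> m \<and> m \<le> j \<and> j < n \<and> g i = g j"
    hence lt: "i < n" "m < n" "j < n" by auto
    hence "f i = f j" using h eq by metis
    hence "f m = f i" using rr h by blast
    thus "g m = g i" using eq lt by metis
  next
    fix i j assume h: "i \<le> j \<and> j < n"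
    hence lt: "i < n" "j < n" by auto
    have "f i \<le> f j" using rr h by blast
    thus "g i \<le> g j" using eq lt by metis
  next
    fix a b assume "1 \<le> a \<and> a \<le> k \<and> 1 \<le> b \<and> b \<le> k"
    thus "card {i. i < n \<and> f i = a} \<le> card {i. i < n \<and> f i = b} + 1" using rr by blast
  qed
qed

lemma is_ribbon_cong:
  assumes "\<And>i. i < n \<Longrightarrow> f i = g i"
  shows "is_ribbon n k f = is_ribbon n k g"
  using is_ribbon_imp[of n f g k] is_ribbon_imp[of n g f k] assms by metis

context X begin

lemma Rn_le: "Rn \<le> 2 * n" unfolding Rn_def by simp

lemma mem:
  assumes ii: "i < n"
  shows "real (mem_bits (E r i)) \<le> 3 * log 2 (real n) + log 2 (real k) + 16"
proof -
  let ?st = "E r i"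
  let ?L = "log 2 (real n)"
  have n1: "1 \<le> n" using sn by simp
  have lk: "0 \<le> log 2 (real k)" using k1 by simp
  have lL: "0 \<le> ?L" using n1 by simp
  have bmid: "real (opt_bits (mid ?st)) \<le> ?L + 1"
    using GEh(8)[OF ii, of r] ii sn n1 unfolding hM_def by (intro ob_le) (auto simp: dst_def)
  have bnl: "real (opt_bits (nl ?st)) \<le> ?L + 1"
    using GEh(4)[OF ii, of r] ii n1 unfolding hNL_def by (intro ob_le) auto
  have bnr: "real (opt_bits (nr ?st)) \<le> ?L + 1"
    using GEh(5)[OF ii, of r] ii n1 unfolding hNR_def by (intro ob_le) auto
  have bcol: "real (opt_bits (col ?st)) \<le> log 2 (real k) + 1"
  proof (rule ob_le)
    fix c assume "col ?st = Some c"
    hence "c = rc i" by (rule correct[OF ii])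
    thus "c \<le> k" using rc_props[OF k1 ii] by simp
  qed (use k1 in simp)
  have btm: "real (opt_bits (tm ?st)) \<le> ?L + 2"
  proof (cases "tm ?st")
    case None thus ?thesis using lL by (simp add: opt_bits_def)
  next
    case (Some t)
    have c: "col ?st = None" using GEh(22)[OF ii, of r] Some unfolding gT_def by simp
    have aw: "awake ?st" using GEh(2)[OF ii, of r] Some unfolding hS_def by auto
    have "t = r" using GEh(3)[OF ii, of r] c aw Some unfolding hU_def by simp
    moreover have "r < Rn" using undec_lt[OF ii c] .
    ultimately have "t \<le> 2 * n" using Rn_le by simp
    hence "real (opt_bits (tm ?st)) \<le> log 2 (real (2 * n)) + 1" using Some n1 by (intro ob_le) auto
    also have "log 2 (real (2 * n)) = 1 + ?L" using n1 by (simp add: log_mult)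
    finally show ?thesis by simp
  qed
  have mb: "real (mem_bits ?st) = 11 + real (opt_bits (mid ?st)) + real (opt_bits (tm ?st)) + real (opt_bits (nl ?st))
      + real (opt_bits (nr ?st)) + real (opt_bits (col ?st))" unfolding mem_bits_def by simp
  show ?thesis
  proof (cases "col ?st")
    case None
    have "nl ?st = None \<or> nr ?st = None" using GEh(20)[OF ii, of r] None unfolding gB_def by simp
    hence "real (opt_bits (nl ?st)) + real (opt_bits (nr ?st)) \<le> ?L + 1"
      using bnl bnr by (auto simp: opt_bits_def)
    thus ?thesis unfolding mb using None bmid btm lk by (simp add: opt_bits_def)
  next
    case (Some c)
    have "tm ?st = None" using GEh(22)[OF ii, of r] Some unfolding gT_def by auto
    thus ?thesis unfolding mb using bmid bnl bnr bcol by (simp add: opt_bits_def)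
  qed
qed

end

theorem theorem3:
  "\<exists>C::real. \<forall>n k s. 1 \<le> k \<longrightarrow> s < n \<longrightarrow>
     (\<exists>R. real R \<le> (2 - 1 / real k) * real n + real k \<and>
          (\<forall>i<n. col (exec n k s R i) \<noteq> None) \<and>
          is_ribbon n k (\<lambda>i. the (col (exec n k s R i)))) \<and>
     (\<forall>r r' i. i < n \<longrightarrow> r \<le> r' \<longrightarrow> col (exec n k s r i) \<noteq> None \<longrightarrow>
          col (exec n k s r' i) = col (exec n k s r i)) \<and>
     (\<forall>R. real (\<Sum>r<R. round_bits n k s r) \<le> (4 - 2 / real k) * real n * log 2 (real n)) \<and>
     (\<forall>r i. i < n \<longrightarrow> real (mem_bits (exec n k s r i)) \<le> 3 * log 2 (real n) + log 2 (real k) + C)"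
proof (intro exI[of _ 16] allI impI)
  fix n k s :: nat
  assume k: "1 \<le> k" and s: "s < n"
  interpret X n k s using k s by unfold_locales
  have A: "\<exists>R. real R \<le> (2 - 1 / real k) * real n + real k \<and>
          (\<forall>i<n. col (exec n k s R i) \<noteq> None) \<and>
          is_ribbon n k (\<lambda>i. the (col (exec n k s R i)))"
  proof (intro exI[of _ Rn] conjI allI impI)
    show "real Rn \<le> (2 - 1 / real k) * real n + real k" by (rule Rn_real)
    fix i assume "i < n" thus "col (exec n k s Rn i) \<noteq> None" by (rule decided)
  next
    have "is_ribbon n k (\<lambda>i. the (col (exec n k s Rn i))) = is_ribbon n k (ribbon_color n k)"
    proof (rule is_ribbon_cong)
      fix i assume ii: "i < n"
      obtain c where c: "col (exec n k s Rn i) = Some c" using decided[OF ii] by auto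
      show "the (col (exec n k s Rn i)) = ribbon_color n k i" using correct[OF ii c] c by simp
    qed
    thus "is_ribbon n k (\<lambda>i. the (col (exec n k s Rn i)))" using rc_ribbon[OF k] by simp
  qed
  have B: "\<forall>r r' i. i < n \<longrightarrow> r \<le> r' \<longrightarrow> col (exec n k s r i) \<noteq> None \<longrightarrow>
          col (exec n k s r' i) = col (exec n k s r i)"
    using col_persist by blast
  have C: "\<forall>R. real (\<Sum>r<R. round_bits n k s r) \<le> (4 - 2 / real k) * real n * log 2 (real n)"
    using bits_final by blast
  have D: "\<forall>r i. i < n \<longrightarrow> real (mem_bits (exec n k s r i)) \<le> 3 * log 2 (real n) + log 2 (real k) + 16"
    using mem by blast
  show "(\<exists>R. real R \<le> (2 - 1 / real k) * real n + real k \<and>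
          (\<forall>i<n. col (exec n k s R i) \<noteq> None) \<and>
          is_ribbon n k (\<lambda>i. the (col (exec n k s R i)))) \<and>
     (\<forall>r r' i. i < n \<longrightarrow> r \<le> r' \<longrightarrow> col (exec n k s r i) \<noteq> None \<longrightarrow>
          col (exec n k s r' i) = col (exec n k s r i)) \<and>
     (\<forall>R. real (\<Sum>r<R. round_bits n k s r) \<le> (4 - 2 / real k) * real n * log 2 (real n)) \<and>
     (\<forall>r i. i < n \<longrightarrow> real (mem_bits (exec n k s r i)) \<le> 3 * log 2 (real n) + log 2 (real k) + 16)"
    using A B C D by blast
qed

end
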